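(* Let $L$ and $f$ be as in the context, and assume that $f$ satisfies (F-1) and (F-2). Then there exists a continuous function $M(x,t)$ on $\mathbb{R}^n\times(0,\infty)$ such that for every $g\in C(\mathbb{R}^n)$ with $g\ge 0$ and every classical solution $u$ of the Cauchy problem (1.1) with initial data $g$, one has $u(x,t)\le M(x,t)$ for all $x\in\mathbb{R}^n$ and all $t>0$.
   Context: Let $L=\sum_{i,j=1}^n a_{ij}(x)\frac{\partial^2}{\partial x_i\partial x_j}+\sum_{i=1}^n b_i(x)\frac{\partial}{\partial x_i}$ with $a_{ij},b_i\in C^{\alpha}(\mathbb{R}^n)$ and $\sum_{i,j}a_{ij}(x)\nu_i\nu_j>0$ for all $x\in\mathbb{R}^n$, $\nu\in\mathbb{R}^n\setminus\{0\}$. Let $f:\mathbb{R}^n\times[0,\infty)\to\mathbb{R}$ be locally Lipschitz in $x$ and in $u$. The Cauchy problem (1.1) with initial data $g\in C(\mathbb{R}^n)$, $g\ge0$, is: $u_t=Lu+f(x,u)$ in $\mathbb{R}^n\times(0,\infty)$, $u(x,0)=g(x)$, $u\ge0$; a (classical) solution is $u\in C^{2,1}(\mathbb{R}^n\times(0,\infty))\cap C(\mathbb{R}^n\times[0,\infty))$ satisfying these. For $R>0$ let $F_R(u)=\sup_{|x|\le R}f(x,u)$. Condition (F-1): $\sup_{u>0}F_R(u)<\infty$ for all $R>0$. Let $\log^{(i)}$ denote the $i$-th iterate of $\log$ ($\log^{(1)}=\log$, $\log^{(2)}=\log\log$, etc.), with $\prod_{i=1}^0\log^{(i)}u=1$.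 Condition (F-2): for each $R>0$ there exist an integer $m\ge0$ and $\epsilon>0$ such that $\lim_{u\to\infty}\frac{F_R(u)}{u\left(\prod_{i=1}^m\log^{(i)}u\right)^2(\log^{(m+1)}u)^{2+\epsilon}}=-\infty$. *)

theory Defs
  imports "HOL-Analysis.Analysis"
begin

definition loc_hoelder :: "real \<Rightarrow> (real^'n \<Rightarrow> real) \<Rightarrow> bool" where
  "loc_hoelder \<alpha> h \<longleftrightarrow>
     (\<forall>R>0. \<exists>C. \<forall>x\<in>cball 0 R. \<forall>y\<in>cball 0 R. \<bar>h x - h y\<bar> \<le> C * dist x y powr \<alpha>)"

definition loc_lipschitz_xu :: "(real^'n \<Rightarrow> real \<Rightarrow> real) \<Rightarrow> bool" where
  "loc_lipschitz_xu f \<longleftrightarrow>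
     (\<forall>R>0. \<exists>C. \<forall>x\<in>cball 0 R. \<forall>y\<in>cball 0 R. \<forall>u\<in>{0..R}. \<forall>v\<in>{0..R}.
        \<bar>f x u - f y v\<bar> \<le> C * (dist x y + \<bar>u - v\<bar>))"

definition elliptic_pointwise :: "('n \<Rightarrow> 'n \<Rightarrow> real^'n \<Rightarrow> real) \<Rightarrow> bool" where
  "elliptic_pointwise a \<longleftrightarrow>
     (\<forall>x. \<forall>\<nu>::real^'n. \<nu> \<noteq> 0 \<longrightarrow> (\<Sum>i\<in>UNIV. \<Sum>j\<in>UNIV. a i j x * \<nu>$i * \<nu>$j) > 0)"

definition F_sup :: "(real^'n \<Rightarrow> real \<Rightarrow> real) \<Rightarrow> real \<Rightarrow> real \<Rightarrow> real" where
  "F_sup f R u = (SUP x\<in>cball 0 R. f x u)"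

definition iterlog :: "nat \<Rightarrow> real \<Rightarrow> real" where
  "iterlog i = ln ^^ i"

definition cond_F1 :: "(real^'n \<Rightarrow> real \<Rightarrow> real) \<Rightarrow> bool" where
  "cond_F1 f \<longleftrightarrow> (\<forall>R>0. bdd_above ((\<lambda>u. F_sup f R u) ` {0<..}))"

definition cond_F2 :: "(real^'n \<Rightarrow> real \<Rightarrow> real) \<Rightarrow> bool" where
  "cond_F2 f \<longleftrightarrow> (\<forall>R>0. \<exists>m::nat. \<exists>\<epsilon>>0.
     filterlim (\<lambda>u. F_sup f R u /
        (u * (\<Prod>i=1..m. iterlog i u)^2 * (iterlog (m+1) u) powr (2 + \<epsilon>))) at_bot at_top)"

text \<open>Classical solution u in C^{2,1}(R^n x (0,inf)) \<inter> C(R^n x [0,inf)) of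
  u_t = L u + f(x,u), u(x,0) = g x, u >= 0.
  Du i = partial derivative in x_i, D2u i j = d/dx_i (d/dx_j u), Dt = d/dt.\<close>
definition classical_solution ::
  "('n \<Rightarrow> 'n \<Rightarrow> real^'n \<Rightarrow> real) \<Rightarrow> ('n \<Rightarrow> real^'n \<Rightarrow> real) \<Rightarrow>
   (real^'n \<Rightarrow> real \<Rightarrow> real) \<Rightarrow> (real^'n \<Rightarrow> real) \<Rightarrow> (real^'n \<Rightarrow> real \<Rightarrow> real) \<Rightarrow> bool" where
  "classical_solution a b f g u \<longleftrightarrow>
     continuous_on (UNIV \<times> {0..}) (\<lambda>(x,t). u x t) \<and>
     (\<forall>x. u x 0 = g x) \<and>
     (\<forall>x. \<forall>t\<ge>0. u x t \<ge> 0) \<and>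
     (\<exists>(Du :: 'n \<Rightarrow> real^'n \<Rightarrow> real \<Rightarrow> real) (D2u :: 'n \<Rightarrow> 'n \<Rightarrow> real^'n \<Rightarrow> real \<Rightarrow> real)
        (Dt :: real^'n \<Rightarrow> real \<Rightarrow> real).
        (\<forall>x. \<forall>t>0.
            ((\<lambda>s. u x s) has_real_derivative Dt x t) (at t) \<and>
            (\<forall>i. ((\<lambda>h. u (x + h *\<^sub>R axis i 1) t) has_real_derivative Du i x t) (at 0)) \<and>
            (\<forall>i j. ((\<lambda>h. Du j (x + h *\<^sub>R axis i 1) t) has_real_derivative D2u i j x t) (at 0)) \<and>
            Dt x t = (\<Sum>i\<in>UNIV. \<Sum>j\<in>UNIV. a i j x * D2u i j x t)
                     + (\<Sum>i\<in>UNIV. b i x * Du i x t) + f x (u x t)) \<and>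
        continuous_on (UNIV \<times> {0<..}) (\<lambda>(x,t). Dt x t) \<and>
        (\<forall>i. continuous_on (UNIV \<times> {0<..}) (\<lambda>(x,t). Du i x t)) \<and>
        (\<forall>i j. continuous_on (UNIV \<times> {0<..}) (\<lambda>(x,t). D2u i j x t)))"

end

theory Submission
  imports Defs "HOL-Analysis.Analysis"
begin


definition qf :: "('n::finite \<Rightarrow> 'n \<Rightarrow> real) \<Rightarrow> ('n \<Rightarrow> real) \<Rightarrow> real" where
  "qf S v = (\<Sum>i\<in>UNIV. \<Sum>j\<in>UNIV. S i j * v i * v j)"

definition bil :: "('n::finite \<Rightarrow> 'n \<Rightarrow> real) \<Rightarrow> ('n \<Rightarrow> real) \<Rightarrow> ('n \<Rightarrow> real) \<Rightarrow> real" where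
  "bil S v w = (\<Sum>i\<in>UNIV. \<Sum>j\<in>UNIV. S i j * v i * w j)"

lemma qf_add: "qf S (\<lambda>i. v i + w i) = qf S v + bil S v w + bil S w v + qf S w"
  unfolding qf_def bil_def by (simp add: sum.distrib[symmetric] algebra_simps)

lemma bil_delta_right: "bil S v (\<lambda>j. if j = k then c else 0) = c * (\<Sum>i\<in>UNIV. S i k * v i)"
proof -
  have "\<And>i. (\<Sum>j\<in>UNIV. S i j * v i * (if j = k then c else 0)) = (\<Sum>j\<in>UNIV. if j = k then S i j * v i * c else 0)"
    by (rule sum.cong) auto
  then show ?thesis unfolding bil_def by (simp add: sum_distrib_left algebra_simps)
qed

lemma bil_delta_left: "bil S (\<lambda>j. if j = k then c else 0) v = c * (\<Sum>j\<in>UNIV. S k j * v j)"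
proof -
  have "(\<Sum>i\<in>UNIV. \<Sum>j\<in>UNIV. S i j * (if i = k then c else 0) * v j) = (\<Sum>i\<in>UNIV. if i = k then (\<Sum>j\<in>UNIV. S i j * c * v j) else 0)"
    by (rule sum.cong) auto
  then show ?thesis unfolding bil_def by (simp add: sum_distrib_left algebra_simps)
qed

lemma qf_delta: "qf S (\<lambda>j. if j = k then c else 0) = c^2 * S k k"
proof -
  have "qf S (\<lambda>j. if j = k then c else 0) = bil S (\<lambda>j. if j = k then c else 0) (\<lambda>j. if j = k then c else 0)"
    unfolding qf_def bil_def ..
  also have "\<dots> = c * (\<Sum>j\<in>UNIV. S k j * (if j = k then c else 0))" by (rule bil_delta_left)
  also have "(\<Sum>j\<in>UNIV. S k j * (if j = k then c else 0)) = (\<Sum>j\<in>UNIV. if j = k then S k j * c else 0)"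
    by (rule sum.cong) auto
  finally show ?thesis by (simp add: power2_eq_square)
qed

lemma qf_shift:
  "qf S (\<lambda>i. v i + (if i = k then c else 0)) =
     qf S v + c * (\<Sum>i\<in>UNIV. S i k * v i) + c * (\<Sum>j\<in>UNIV. S k j * v j) + c^2 * S k k"
  by (simp add: qf_add bil_delta_left bil_delta_right qf_delta)

lemma sum_delta_mult: "(\<Sum>i\<in>(UNIV::'n::finite set). f i * (if i = j then c else 0)) = f j * (c::real)"
proof -
  have "(\<Sum>i\<in>(UNIV::'n set). f i * (if i = j then c else 0)) = (\<Sum>i\<in>UNIV. if i = j then f i * c else 0)"
    by (rule sum.cong) auto
  then show ?thesis by simp
qed

definition psd :: "('n::finite \<Rightarrow> 'n \<Rightarrow> real) \<Rightarrow> bool" where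
  "psd S \<longleftrightarrow> (\<forall>i j. S i j = S j i) \<and> (\<forall>v. qf S v \<ge> 0)"

lemma psd_offdiag_zero:
  assumes "psd S" "S k k = 0"
  shows "S k j = 0"
proof (cases "j = k")
  case True then show ?thesis using assms by simp
next
  case False
  have "0 \<le> qf S (\<lambda>i. (if i = j then 1 else 0) + (if i = k then t else 0))" for t
    using assms(1) unfolding psd_def by blast
  then have *: "0 \<le> S j j + 2 * t * S k j" for t
    using assms False unfolding qf_shift psd_def
    by (simp add: qf_delta sum_delta_mult algebra_simps)
  show ?thesis
  proof (rule ccontr)
    assume "S k j \<noteq> 0"
    have "0 \<le> S j j + 2 * (- (\<bar>S j j\<bar> + 1) / (2 * S k j)) * S k j" by (rule *)
    also have "\<dots> = S j j - (\<bar>S j j\<bar> + 1)" using \<open>S k j \<noteq> 0\<close> by (simp add: field_simps)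
    finally show False by linarith
  qed
qed

lemma psd_trace_aux:
  fixes H :: "'n::finite \<Rightarrow> 'n \<Rightarrow> real"
  assumes H: "\<forall>v. qf H v \<le> 0"
  shows "finite J \<Longrightarrow> \<forall>S. psd S \<and> (\<forall>i j. S i j \<noteq> 0 \<longrightarrow> i \<in> J \<and> j \<in> J) \<longrightarrow>
           (\<Sum>i\<in>UNIV. \<Sum>j\<in>UNIV. S i j * H i j) \<le> 0"
proof (induction J rule: finite_induct)
  case empty
  then show ?case by auto
next
  case (insert k J)
  show ?case
  proof (intro allI impI, elim conjE)
    fix S assume S: "psd S" and supp: "\<forall>i j. S i j \<noteq> 0 \<longrightarrow> i \<in> insert k J \<and> j \<in> insert k J"
    have sym: "\<And>i j. S i j = S j i" using S unfolding psd_def by blast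
    have "0 \<le> qf S (\<lambda>j. if j = k then 1 else 0)" using S unfolding psd_def by blast
    then have Skk: "S k k \<ge> 0" by (simp add: qf_delta)
    show "(\<Sum>i\<in>UNIV. \<Sum>j\<in>UNIV. S i j * H i j) \<le> 0"
    proof (cases "S k k = 0")
      case True
      have z: "S k j = 0" for j using psd_offdiag_zero[OF S True] .
      have "\<forall>i j. S i j \<noteq> 0 \<longrightarrow> i \<in> J \<and> j \<in> J"
        using supp z sym by (metis insertE)
      then show ?thesis using insert.IH S by blast
    next
      case False
      with Skk have pos: "S k k > 0" by simp
      define w where "w i = S i k / sqrt (S k k)" for i
      define S' where "S' i j = S i j - w i * w j" for i j
      have ww: "w i * w j = S i k * S j k / S k k" for i j
        using pos unfolding w_def by (simp add: field_simps)
      have S'sym: "S' i j = S' j i" for i j unfolding S'_def using ww sym by (simp add: mult.commute)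
      have S'k: "S' k j = 0" for j unfolding S'_def ww using pos sym by simp
      have S'qf: "qf S' v \<ge> 0" for v
      proof -
        define c where "c = - (\<Sum>i\<in>UNIV. S i k * v i) / S k k"
        have e: "(\<Sum>j\<in>UNIV. S k j * v j) = (\<Sum>i\<in>UNIV. S i k * v i)"
          using sym by simp
        have "0 \<le> qf S (\<lambda>i. v i + (if i = k then c else 0))" using S unfolding psd_def by blast
        also have "\<dots> = qf S v - (\<Sum>i\<in>UNIV. S i k * v i)^2 / S k k"
          unfolding qf_shift e c_def using pos by (simp add: field_simps power2_eq_square)
        also have "qf S v - (\<Sum>i\<in>UNIV. S i k * v i)^2 / S k k = qf S' v"
        proof -
          have "qf S' v = qf S v - (\<Sum>i\<in>UNIV. \<Sum>j\<in>UNIV. (S i k * v i) * (S j k * v j)) / S k k"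
            unfolding qf_def S'_def ww
            by (simp add: sum_subtractf sum_divide_distrib algebra_simps)
          also have "(\<Sum>i\<in>UNIV. \<Sum>j\<in>UNIV. (S i k * v i) * (S j k * v j)) = (\<Sum>i\<in>UNIV. S i k * v i)^2"
            by (simp add: power2_eq_square sum_product)
          finally show ?thesis by simp
        qed
        finally show ?thesis .
      qed
      have psdS': "psd S'" unfolding psd_def using S'sym S'qf by blast
      have suppS': "\<forall>i j. S' i j \<noteq> 0 \<longrightarrow> i \<in> J \<and> j \<in> J"
      proof (intro allI impI)
        fix i j assume ne: "S' i j \<noteq> 0"
        have "i \<noteq> k" using ne S'k S'sym by metis
        moreover have "j \<noteq> k" using ne S'k S'sym by metis
        moreover have "S i j \<noteq> 0 \<or> S i k \<noteq> 0 \<and> S j k \<noteq> 0" using ne unfolding S'_def ww by auto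
        ultimately show "i \<in> J \<and> j \<in> J" using supp by blast
      qed
      have IH: "(\<Sum>i\<in>UNIV. \<Sum>j\<in>UNIV. S' i j * H i j) \<le> 0" using insert.IH psdS' suppS' by blast
      have "(\<Sum>i\<in>UNIV. \<Sum>j\<in>UNIV. S i j * H i j) = (\<Sum>i\<in>UNIV. \<Sum>j\<in>UNIV. S' i j * H i j) + qf H w"
        unfolding S'_def qf_def by (simp add: sum.distrib[symmetric] algebra_simps)
      also have "\<dots> \<le> 0" using IH H by (simp add: add_nonpos_nonpos)
      finally show ?thesis .
    qed
  qed
qed

lemma psd_trace:
  fixes S H :: "'n::finite \<Rightarrow> 'n \<Rightarrow> real"
  assumes "psd S" "\<forall>v. qf H v \<le> 0"
  shows "(\<Sum>i\<in>UNIV. \<Sum>j\<in>UNIV. S i j * H i j) \<le> 0"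
  using psd_trace_aux[OF assms(2), of UNIV] assms(1) by auto



lemma mvt0:
  fixes g g' :: "real \<Rightarrow> real"
  assumes "\<And>h. \<bar>h\<bar> \<le> \<bar>a\<bar> \<Longrightarrow> (g has_real_derivative g' h) (at h)"
  shows "\<exists>\<theta>. \<bar>\<theta>\<bar> \<le> \<bar>a\<bar> \<and> g a - g 0 = a * g' \<theta>"
proof -
  consider "a = 0" | "a > 0" | "a < 0" by linarith
  then show ?thesis
  proof cases
    case 1 then show ?thesis by (intro exI[of _ 0]) simp
  next
    case 2
    then obtain z where "0 < z" "z < a" "g a - g 0 = (a - 0) * g' z"
      using MVT2[of 0 a g g'] assms by force
    then show ?thesis by (intro exI[of _ z]) auto
  next
    case 3
    then obtain z where "a < z" "z < 0" "g 0 - g a = (0 - a) * g' z"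
      using MVT2[of a 0 g g'] assms by force
    then show ?thesis by (intro exI[of _ z]) auto
  qed
qed

lemma partial_shift:
  fixes \<phi> :: "real^'n::finite \<Rightarrow> real"
  assumes "((\<lambda>h. \<phi> (z + h *\<^sub>R axis i 1)) has_real_derivative D) (at 0)"
    and "z = p + h0 *\<^sub>R axis i 1"
  shows "((\<lambda>h. \<phi> (p + h *\<^sub>R axis i 1)) has_real_derivative D) (at h0)"
proof -
  have "((\<lambda>h. \<phi> (z + (h - h0) *\<^sub>R axis i 1)) has_real_derivative D) (at (0 + h0))"
    using DERIV_shift[of "\<lambda>h. \<phi> (z + h *\<^sub>R axis i 1)" D h0 "-h0"] assms(1)
    by (simp add: algebra_simps)
  moreover have "(\<lambda>h. \<phi> (z + (h - h0) *\<^sub>R axis i 1)) = (\<lambda>h. \<phi> (p + h *\<^sub>R axis i 1))"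
    using assms(2) by (simp add: algebra_simps)
  ultimately show ?thesis by simp
qed

definition partvec :: "'n::finite set \<Rightarrow> real^'n \<Rightarrow> real^'n" where
  "partvec I v = (\<chi> j. if j \<in> I then v$j else 0)"

lemma partvec_insert: "partvec (insert k I) v = partvec I v + (if k \<in> I then 0 else v$k) *\<^sub>R axis k 1"
  unfolding partvec_def axis_def by (auto simp: vec_eq_iff)

lemma norm_partvec_le: "\<bar>h\<bar> \<le> \<bar>v$k\<bar> \<Longrightarrow> k \<notin> I \<Longrightarrow> norm (partvec I v + h *\<^sub>R axis k 1) \<le> norm v"
  by (rule norm_le_componentwise_cart) (auto simp: partvec_def axis_def)

lemma partials_frechet:
  fixes \<phi> :: "real^'n::finite \<Rightarrow> real"
  assumes S: "open S" "y \<in> S"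
    and d: "\<forall>z\<in>S. \<forall>i. ((\<lambda>h. \<phi> (z + h *\<^sub>R axis i 1)) has_real_derivative d1 i z) (at 0)"
    and c: "\<forall>i. continuous_on S (d1 i)"
  shows "(\<phi> has_derivative (\<lambda>v. \<Sum>i\<in>UNIV. v$i * d1 i y)) (at y)"
  unfolding has_derivative_at_alt
proof (intro conjI allI impI)
  show "bounded_linear (\<lambda>v. \<Sum>i\<in>UNIV. v$i * d1 i y)"
    by (intro bounded_linear_sum) (rule bounded_linear_compose[OF bounded_linear_mult_left bounded_linear_vec_nth])
next
  fix e :: real assume e: "e > 0"
  define e' where "e' = e / real CARD('n)"
  have e': "e' > 0" unfolding e'_def using e by simp
  obtain r where r: "r > 0" "ball y r \<subseteq> S" using S open_contains_ball by blast
  have "\<forall>i. \<exists>dd>0. \<forall>z. norm (z - y) < dd \<longrightarrow> \<bar>d1 i z - d1 i y\<bar> < e'"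
  proof
    fix i
    have "isCont (d1 i) y" using c S continuous_on_eq_continuous_at by blast
    then show "\<exists>dd>0. \<forall>z. norm (z - y) < dd \<longrightarrow> \<bar>d1 i z - d1 i y\<bar> < e'"
      unfolding continuous_at_real_range using e' by blast
  qed
  then obtain dd where dd: "\<And>i. dd i > 0" "\<And>i z. norm (z - y) < dd i \<Longrightarrow> \<bar>d1 i z - d1 i y\<bar> < e'"
    by metis
  define \<delta> where "\<delta> = min r (Min (range dd))"
  have "Min (range dd) > 0" using dd(1) by (simp add: Min_gr_iff)
  then have \<delta>: "\<delta> > 0" unfolding \<delta>_def using r by simp
  have \<delta>le: "\<delta> \<le> dd i" for i unfolding \<delta>_def by (simp add: min.coboundedI2)
  show "\<exists>d>0. \<forall>z. norm (z - y) < d \<longrightarrow>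
      norm (\<phi> z - \<phi> y - (\<Sum>i\<in>UNIV. (z - y)$i * d1 i y)) \<le> e * norm (z - y)"
  proof (intro exI[of _ \<delta>] conjI allI impI \<delta>)
    fix z assume z: "norm (z - y) < \<delta>"
    define v where "v = z - y"
    have nv: "norm v < \<delta>" using z v_def by simp
    have main: "finite I \<Longrightarrow> \<bar>\<phi> (y + partvec I v) - \<phi> y - (\<Sum>i\<in>I. v$i * d1 i y)\<bar> \<le> (\<Sum>i\<in>I. \<bar>v$i\<bar> * e')" for I
    proof (induction I rule: finite_induct)
      case empty
      have "partvec {} v = 0" unfolding partvec_def by (simp add: vec_eq_iff)
      then show ?case by simp
    next
      case (insert k I)
      define p where "p = y + partvec I v"
      have inS: "p + h *\<^sub>R axis k 1 \<in> S" and near: "norm (p + h *\<^sub>R axis k 1 - y) < \<delta>"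
        if "\<bar>h\<bar> \<le> \<bar>v$k\<bar>" for h
      proof -
        have "norm (p + h *\<^sub>R axis k 1 - y) = norm (partvec I v + h *\<^sub>R axis k 1)"
          unfolding p_def by (simp add: algebra_simps)
        also have "\<dots> \<le> norm v" using norm_partvec_le[OF that insert(2)] .
        finally show "norm (p + h *\<^sub>R axis k 1 - y) < \<delta>" using nv by simp
        then have "p + h *\<^sub>R axis k 1 \<in> ball y r" unfolding \<delta>_def by (simp add: dist_norm norm_minus_commute)
        then show "p + h *\<^sub>R axis k 1 \<in> S" using r by blast
      qed
      have "\<And>h. \<bar>h\<bar> \<le> \<bar>v$k\<bar> \<Longrightarrow> ((\<lambda>h. \<phi> (p + h *\<^sub>R axis k 1)) has_real_derivative d1 k (p + h *\<^sub>R axis k 1)) (at h)"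
        by (rule partial_shift[OF _ refl]) (use d inS in blast)
      from mvt0[OF this] obtain \<theta> where th: "\<bar>\<theta>\<bar> \<le> \<bar>v$k\<bar>"
        "\<phi> (p + v$k *\<^sub>R axis k 1) - \<phi> (p + 0 *\<^sub>R axis k 1) = v$k * d1 k (p + \<theta> *\<^sub>R axis k 1)" by blast
      have "\<bar>d1 k (p + \<theta> *\<^sub>R axis k 1) - d1 k y\<bar> < e'"
        using dd(2)[OF less_le_trans[OF near[OF th(1)] \<delta>le]] .
      then have "\<bar>v$k * d1 k (p + \<theta> *\<^sub>R axis k 1) - v$k * d1 k y\<bar> \<le> \<bar>v$k\<bar> * e'"
        by (metis abs_mult less_eq_real_def mult_left_mono abs_ge_zero right_diff_distrib)
      moreover have "y + partvec (insert k I) v = p + v$k *\<^sub>R axis k 1"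
        unfolding p_def partvec_insert using insert(2) by simp
      ultimately show ?case using insert th(2) unfolding p_def
        by (simp add: abs_le_iff add.assoc)
    qed
    have "partvec UNIV v = v" unfolding partvec_def by (simp add: vec_eq_iff)
    then have "\<bar>\<phi> z - \<phi> y - (\<Sum>i\<in>UNIV. v$i * d1 i y)\<bar> \<le> (\<Sum>i\<in>UNIV. \<bar>v$i\<bar> * e')"
      using main[of UNIV] unfolding v_def by simp
    also have "\<dots> \<le> (\<Sum>i\<in>(UNIV::'n set). norm v * e')"
      by (intro sum_mono mult_right_mono component_le_norm_cart) (use e' in auto)
    also have "\<dots> = e * norm v" unfolding e'_def by simp
    finally show "norm (\<phi> z - \<phi> y - (\<Sum>i\<in>UNIV. (z - y)$i * d1 i y)) \<le> e * norm (z - y)"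
      unfolding v_def by simp
  qed
qed

lemma norm_two_axes: "norm (s *\<^sub>R axis i (1::real) + t *\<^sub>R axis j 1 :: real^'n::finite) \<le> \<bar>s\<bar> + \<bar>t\<bar>"
  by (rule order_trans[OF norm_triangle_ineq]) simp

lemma second_diff:
  fixes \<phi> :: "real^'n::finite \<Rightarrow> real"
  assumes d: "\<forall>z\<in>S. \<forall>i. ((\<lambda>h. \<phi> (z + h *\<^sub>R axis i 1)) has_real_derivative d1 i z) (at 0)"
    and dd: "\<forall>z\<in>S. \<forall>i j. ((\<lambda>h. d1 j (z + h *\<^sub>R axis i 1)) has_real_derivative d2 i j z) (at 0)"
    and ball: "ball x \<delta> \<subseteq> S" and h: "0 < h" "2 * h < \<delta>"
  shows "\<exists>\<xi>. norm (\<xi> - x) < \<delta> \<and>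
    \<phi> (x + h *\<^sub>R axis i 1 + h *\<^sub>R axis j 1) - \<phi> (x + h *\<^sub>R axis i 1) - \<phi> (x + h *\<^sub>R axis j 1) + \<phi> x
      = h^2 * d2 j i \<xi>"
proof -
  have inS: "x + s *\<^sub>R axis i 1 + t *\<^sub>R axis j 1 \<in> S" "norm ((x + s *\<^sub>R axis i 1 + t *\<^sub>R axis j 1) - x) < \<delta>"
    if "\<bar>s\<bar> \<le> h" "\<bar>t\<bar> \<le> h" for s t
  proof -
    have "norm ((x + s *\<^sub>R axis i 1 + t *\<^sub>R axis j 1) - x) \<le> \<bar>s\<bar> + \<bar>t\<bar>"
      using norm_two_axes[of s i t j] by (simp add: algebra_simps)
    then show "norm ((x + s *\<^sub>R axis i 1 + t *\<^sub>R axis j 1) - x) < \<delta>" using that h by linarith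
    then show "x + s *\<^sub>R axis i 1 + t *\<^sub>R axis j 1 \<in> S" using ball by (metis mem_ball dist_norm norm_minus_commute subsetD)
  qed
  define g where "g s = \<phi> ((x + h *\<^sub>R axis j 1) + s *\<^sub>R axis i 1) - \<phi> (x + s *\<^sub>R axis i 1)" for s
  define g' where "g' s = d1 i (x + s *\<^sub>R axis i 1 + h *\<^sub>R axis j 1) - d1 i (x + s *\<^sub>R axis i 1)" for s
  have "(g has_real_derivative g' s) (at s)" if "\<bar>s\<bar> \<le> \<bar>h\<bar>" for s
  proof -
    have m1: "x + s *\<^sub>R axis i 1 + h *\<^sub>R axis j 1 \<in> S" using inS(1)[of s h] that h by simp
    have m2: "x + s *\<^sub>R axis i 1 \<in> S" using inS(1)[of s 0] that h by simp
    have a: "((\<lambda>s. \<phi> ((x + h *\<^sub>R axis j 1) + s *\<^sub>R axis i 1)) has_real_derivative d1 i (x + s *\<^sub>R axis i 1 + h *\<^sub>R axis j 1)) (at s)"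
      by (rule partial_shift) (use d m1 in \<open>auto simp: algebra_simps\<close>)
    have b: "((\<lambda>s. \<phi> (x + s *\<^sub>R axis i 1)) has_real_derivative d1 i (x + s *\<^sub>R axis i 1)) (at s)"
      by (rule partial_shift) (use d m2 in \<open>auto simp: algebra_simps\<close>)
    show ?thesis unfolding g_def g'_def by (rule DERIV_diff[OF a b])
  qed
  from mvt0[OF this] obtain \<sigma> where sig: "\<bar>\<sigma>\<bar> \<le> \<bar>h\<bar>" "g h - g 0 = h * g' \<sigma>" by blast
  define k where "k t = d1 i (x + \<sigma> *\<^sub>R axis i 1 + t *\<^sub>R axis j 1)" for t
  have "(k has_real_derivative d2 j i (x + \<sigma> *\<^sub>R axis i 1 + t *\<^sub>R axis j 1)) (at t)" if "\<bar>t\<bar> \<le> \<bar>h\<bar>" for t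
  proof -
    have m: "x + \<sigma> *\<^sub>R axis i 1 + t *\<^sub>R axis j 1 \<in> S" using inS(1)[of \<sigma> t] that sig h by simp
    show ?thesis unfolding k_def
      by (rule partial_shift[where \<phi>="d1 i"]) (use dd m in \<open>auto simp: algebra_simps\<close>)
  qed
  from mvt0[OF this] obtain \<tau> where tau: "\<bar>\<tau>\<bar> \<le> \<bar>h\<bar>"
    "k h - k 0 = h * d2 j i (x + \<sigma> *\<^sub>R axis i 1 + \<tau> *\<^sub>R axis j 1)" by blast
  have "g' \<sigma> = k h - k 0" unfolding g'_def k_def by simp
  moreover have "g h - g 0 = \<phi> (x + h *\<^sub>R axis i 1 + h *\<^sub>R axis j 1) - \<phi> (x + h *\<^sub>R axis i 1) - \<phi> (x + h *\<^sub>R axis j 1) + \<phi> x"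
    unfolding g_def by (simp add: algebra_simps)
  ultimately show ?thesis
    using inS(2)[of \<sigma> \<tau>] sig tau h
    by (intro exI[of _ "x + \<sigma> *\<^sub>R axis i 1 + \<tau> *\<^sub>R axis j 1"]) (simp add: power2_eq_square)
qed

lemma contra3: "A + B < 2 * (T / 3) \<Longrightarrow> 0 < T / 3 \<Longrightarrow> T \<le> A + B \<Longrightarrow> False" for A B T :: real
  by linarith

lemma schwarz:
  fixes \<phi> :: "real^'n::finite \<Rightarrow> real"
  assumes S: "open S" "x \<in> S"
    and d: "\<forall>z\<in>S. \<forall>i. ((\<lambda>h. \<phi> (z + h *\<^sub>R axis i 1)) has_real_derivative d1 i z) (at 0)"
    and dd: "\<forall>z\<in>S. \<forall>i j. ((\<lambda>h. d1 j (z + h *\<^sub>R axis i 1)) has_real_derivative d2 i j z) (at 0)"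
    and c2: "\<forall>i j. continuous_on S (d2 i j)"
  shows "d2 i j x = d2 j i x"
proof (rule ccontr)
  assume ne: "d2 i j x \<noteq> d2 j i x"
  define e where "e = \<bar>d2 i j x - d2 j i x\<bar> / 3"
  have e: "e > 0" using ne unfolding e_def by simp
  obtain r where r: "r > 0" "ball x r \<subseteq> S" using S open_contains_ball by blast
  have "\<exists>dd>0. \<forall>z. norm (z - x) < dd \<longrightarrow> \<bar>d2 a b z - d2 a b x\<bar> < e" for a b
  proof -
    have "isCont (d2 a b) x" using c2 S continuous_on_eq_continuous_at by blast
    then show ?thesis unfolding continuous_at_real_range using e by blast
  qed
  then obtain d_ij d_ji where dij: "d_ij > 0" "\<And>z. norm (z - x) < d_ij \<Longrightarrow> \<bar>d2 i j z - d2 i j x\<bar> < e"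
    and dji: "d_ji > 0" "\<And>z. norm (z - x) < d_ji \<Longrightarrow> \<bar>d2 j i z - d2 j i x\<bar> < e"
    by meson
  define \<delta> where "\<delta> = min r (min d_ij d_ji)"
  have \<delta>: "\<delta> > 0" "ball x \<delta> \<subseteq> S" unfolding \<delta>_def using r dij dji by auto
  define h where "h = \<delta> / 4"
  have h: "0 < h" "2 * h < \<delta>" unfolding h_def using \<delta> by auto
  obtain \<xi> where xi: "norm (\<xi> - x) < \<delta>"
    "\<phi> (x + h *\<^sub>R axis i 1 + h *\<^sub>R axis j 1) - \<phi> (x + h *\<^sub>R axis i 1) - \<phi> (x + h *\<^sub>R axis j 1) + \<phi> x = h^2 * d2 j i \<xi>"
    using second_diff[OF d dd \<delta>(2) h] by blast
  obtain \<zeta> where ze: "norm (\<zeta> - x) < \<delta>"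
    "\<phi> (x + h *\<^sub>R axis j 1 + h *\<^sub>R axis i 1) - \<phi> (x + h *\<^sub>R axis j 1) - \<phi> (x + h *\<^sub>R axis i 1) + \<phi> x = h^2 * d2 i j \<zeta>"
    using second_diff[OF d dd \<delta>(2) h, of j i] by blast
  have "h^2 * d2 j i \<xi> = h^2 * d2 i j \<zeta>" using xi(2) ze(2) by (simp add: algebra_simps)
  then have eq: "d2 j i \<xi> = d2 i j \<zeta>" using h by simp
  have "\<bar>d2 j i \<xi> - d2 j i x\<bar> < e" using dji(2) xi(1) unfolding \<delta>_def by simp
  moreover have "\<bar>d2 i j \<zeta> - d2 i j x\<bar> < e" using dij(2) ze(1) unfolding \<delta>_def by simp
  ultimately have "\<bar>d2 j i \<xi> - d2 j i x\<bar> + \<bar>d2 i j \<xi>' - d2 i j x\<bar> < 2 * e" if "\<xi>' = \<zeta>" for \<xi>'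
    using that by simp
  then have lt: "\<bar>d2 j i \<xi> - d2 j i x\<bar> + \<bar>d2 j i \<xi> - d2 i j x\<bar> < 2 * e" using eq by simp
  have "\<bar>d2 i j x - d2 j i x\<bar> \<le> \<bar>d2 j i \<xi> - d2 j i x\<bar> + \<bar>d2 j i \<xi> - d2 i j x\<bar>" by linarith
  from contra3[OF lt[unfolded e_def] e[unfolded e_def] this] show False .
qed



lemma line_deriv:
  fixes \<phi> :: "real^'n::finite \<Rightarrow> real"
  assumes "(\<phi> has_derivative (\<lambda>w. \<Sum>i\<in>UNIV. w$i * D i)) (at (x + h *\<^sub>R \<nu>))"
  shows "((\<lambda>h. \<phi> (x + h *\<^sub>R \<nu>)) has_real_derivative (\<Sum>i\<in>UNIV. \<nu>$i * D i)) (at h)"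
proof -
  have l: "((\<lambda>h. x + h *\<^sub>R \<nu>) has_derivative (\<lambda>h. h *\<^sub>R \<nu>)) (at h)"
    by (auto intro!: derivative_eq_intros)
  have "((\<lambda>h. \<phi> (x + h *\<^sub>R \<nu>)) has_derivative (\<lambda>h'. \<Sum>i\<in>UNIV. (h' *\<^sub>R \<nu>)$i * D i)) (at h)"
    using has_derivative_compose[OF l assms] by simp
  moreover have "(\<lambda>h'. \<Sum>i\<in>UNIV. (h' *\<^sub>R \<nu>)$i * D i) = (*) (\<Sum>i\<in>UNIV. \<nu>$i * D i)"
  proof (rule ext)
    fix h' :: real
    have "(\<Sum>i\<in>UNIV. (h' *\<^sub>R \<nu>)$i * D i) = (\<Sum>i\<in>UNIV. h' * (\<nu>$i * D i))" by (simp add: mult.assoc)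
    also have "\<dots> = h' * (\<Sum>i\<in>UNIV. \<nu>$i * D i)" by (rule sum_distrib_left[symmetric])
    finally show "(\<Sum>i\<in>UNIV. (h' *\<^sub>R \<nu>)$i * D i) = (\<Sum>i\<in>UNIV. \<nu>$i * D i) * h'" by simp
  qed
  ultimately show ?thesis unfolding has_field_derivative_def by simp
qed

lemma maxpoint:
  fixes \<phi> :: "real^'n::finite \<Rightarrow> real"
  assumes S: "open S" "x \<in> S" and mx: "\<forall>y\<in>S. \<phi> y \<le> \<phi> x"
    and d: "\<forall>z\<in>S. \<forall>i. ((\<lambda>h. \<phi> (z + h *\<^sub>R axis i 1)) has_real_derivative d1 i z) (at 0)"
    and dd: "\<forall>z\<in>S. \<forall>i j. ((\<lambda>h. d1 j (z + h *\<^sub>R axis i 1)) has_real_derivative d2 i j z) (at 0)"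
    and c1: "\<forall>i. continuous_on S (d1 i)"
    and c2: "\<forall>i j. continuous_on S (d2 i j)"
  shows maxpoint_grad: "d1 i x = 0" and maxpoint_hess: "qf (\<lambda>i j. d2 i j x) v \<le> 0"
proof -
  obtain r where r: "r > 0" "ball x r \<subseteq> S" using S open_contains_ball by blast
  show grad: "d1 k x = 0" for k
  proof -
    have "((\<lambda>h. \<phi> (x + h *\<^sub>R axis k 1)) has_real_derivative d1 k x) (at 0)" using d S by blast
    moreover have "\<forall>y. \<bar>0 - y\<bar> < r \<longrightarrow> \<phi> (x + y *\<^sub>R axis k 1) \<le> \<phi> (x + 0 *\<^sub>R axis k 1)"
    proof (intro allI impI)
      fix y :: real assume "\<bar>0 - y\<bar> < r"
      then have "x + y *\<^sub>R axis k 1 \<in> ball x r" by (simp add: dist_norm)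
      then show "\<phi> (x + y *\<^sub>R axis k 1) \<le> \<phi> (x + 0 *\<^sub>R axis k 1)" using r mx by auto
    qed
    ultimately show ?thesis using DERIV_local_max[OF _ r(1)] by blast
  qed
  define \<nu> where "\<nu> = (\<chi> i. (v i :: real))"
  define \<rho> where "\<rho> = r / (norm \<nu> + 1)"
  have n1: "norm \<nu> + 1 > 0" by (smt (verit) norm_ge_zero)
  have \<rho>: "\<rho> > 0" unfolding \<rho>_def using r n1 by simp
  have inS: "x + h *\<^sub>R \<nu> \<in> S" if "\<bar>h\<bar> < \<rho>" for h
  proof -
    have "norm (h *\<^sub>R \<nu>) = \<bar>h\<bar> * norm \<nu>" by simp
    also have "\<dots> \<le> \<rho> * norm \<nu>" using that by (simp add: mult_right_mono)
    also have "\<dots> < r" unfolding \<rho>_def using r n1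
      by (simp add: field_simps)
    finally have "x + h *\<^sub>R \<nu> \<in> ball x r" by (simp add: dist_norm)
    then show ?thesis using r by blast
  qed
  have fd: "(\<phi> has_derivative (\<lambda>w. \<Sum>i\<in>UNIV. w$i * d1 i z)) (at z)" if "z \<in> S" for z
    by (rule partials_frechet[OF S(1) that d c1])
  have fd2: "(d1 i has_derivative (\<lambda>w. \<Sum>j\<in>UNIV. w$j * d2 j i z)) (at z)" if "z \<in> S" for z i
    by (rule partials_frechet[OF S(1) that _ c2[rule_format, of _ i, THEN allI]]) (use dd in blast)
  define G1 where "G1 h = (\<Sum>i\<in>UNIV. \<nu>$i * d1 i (x + h *\<^sub>R \<nu>))" for h
  have g': "((\<lambda>h. \<phi> (x + h *\<^sub>R \<nu>)) has_real_derivative G1 h) (at h)" if "\<bar>h\<bar> < \<rho>" for h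
    unfolding G1_def by (rule line_deriv[OF fd[OF inS[OF that]]])
  define c where "c = (\<Sum>i\<in>UNIV. \<nu>$i * (\<Sum>j\<in>UNIV. \<nu>$j * d2 j i x))"
  have g'': "(G1 has_real_derivative c) (at 0)"
    unfolding G1_def c_def
  proof (rule DERIV_sum, rule DERIV_cmult)
    fix i
    show "((\<lambda>h. d1 i (x + h *\<^sub>R \<nu>)) has_real_derivative (\<Sum>j\<in>UNIV. \<nu>$j * d2 j i x)) (at 0)"
      using line_deriv[of "d1 i" "\<lambda>j. d2 j i x" x 0 \<nu>] fd2[OF S(2)] by simp
  qed
  have qc: "qf (\<lambda>i j. d2 i j x) v = c"
    unfolding qf_def c_def \<nu>_def
    by (subst sum.swap) (simp add: sum_distrib_left algebra_simps)
  show "qf (\<lambda>i j. d2 i j x) v \<le> 0"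
  proof (rule ccontr)
    assume "\<not> qf (\<lambda>i j. d2 i j x) v \<le> 0"
    then have cpos: "c > 0" using qc by simp
    have G10: "G1 0 = 0" unfolding G1_def using grad by simp
    obtain e where e: "e > 0" "\<And>h. 0 < h \<Longrightarrow> h < e \<Longrightarrow> G1 0 < G1 (0 + h)"
      using DERIV_pos_inc_right[OF g'' cpos] by blast
    define h0 where "h0 = min e \<rho> / 2"
    have h0: "0 < h0" "h0 < e" "h0 < \<rho>" unfolding h0_def using e \<rho> by auto
    obtain z where z: "0 < z" "z < h0" "\<phi> (x + h0 *\<^sub>R \<nu>) - \<phi> (x + 0 *\<^sub>R \<nu>) = (h0 - 0) * G1 z"
      using MVT2[OF h0(1), of "\<lambda>h. \<phi> (x + h *\<^sub>R \<nu>)" G1] g' h0 by force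
    have "G1 z > 0" using e(2)[of z] z h0 G10 by simp
    then have "h0 * G1 z > 0" using h0(1) by simp
    then have "\<phi> (x + h0 *\<^sub>R \<nu>) > \<phi> x" using z(3) by simp
    moreover have "\<phi> (x + h0 *\<^sub>R \<nu>) \<le> \<phi> x" using mx inS[of h0] h0 by simp
    ultimately show False by simp
  qed
qed

lemma elliptic_trace:
  fixes A H :: "'n::finite \<Rightarrow> 'n \<Rightarrow> real"
  assumes ell: "\<forall>\<nu>::real^'n. \<nu> \<noteq> 0 \<longrightarrow> (\<Sum>i\<in>UNIV. \<Sum>j\<in>UNIV. A i j * \<nu>$i * \<nu>$j) > 0"
    and Hsym: "\<And>i j. H i j = H j i"
    and Hneg: "\<And>v. qf H v \<le> 0"
  shows "(\<Sum>i\<in>UNIV. \<Sum>j\<in>UNIV. A i j * H i j) \<le> 0"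
proof -
  define S where "S i j = (A i j + A j i) / 2" for i j
  have qA: "qf A v \<ge> 0" for v
  proof (cases "(\<chi> i. v i) = (0::real^'n)")
    case True
    then have "v i = 0" for i by (metis vec_lambda_beta zero_index)
    then show ?thesis unfolding qf_def by simp
  next
    case False
    from ell[rule_format, OF False] show ?thesis unfolding qf_def by simp
  qed
  have "qf S v = qf A v" for v
  proof -
    have "qf S v = (qf A v + (\<Sum>i\<in>UNIV. \<Sum>j\<in>UNIV. A j i * v i * v j)) / 2"
      unfolding qf_def S_def by (simp add: sum.distrib sum_divide_distrib algebra_simps add_divide_distrib)
    also have "(\<Sum>i\<in>UNIV. \<Sum>j\<in>UNIV. A j i * v i * v j) = qf A v"
      unfolding qf_def by (subst sum.swap) (simp add: mult_ac)
    finally show ?thesis by simp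
  qed
  then have "psd S" unfolding psd_def S_def using qA by (simp add: add.commute)
  from psd_trace[OF this] Hneg have le: "(\<Sum>i\<in>UNIV. \<Sum>j\<in>UNIV. S i j * H i j) \<le> 0" by blast
  have "(\<Sum>i\<in>UNIV. \<Sum>j\<in>UNIV. A j i * H i j) = (\<Sum>i\<in>UNIV. \<Sum>j\<in>UNIV. A i j * H i j)"
    by (subst sum.swap) (simp add: Hsym)
  moreover have "(\<Sum>i\<in>UNIV. \<Sum>j\<in>UNIV. S i j * H i j) = ((\<Sum>i\<in>UNIV. \<Sum>j\<in>UNIV. A i j * H i j) + (\<Sum>i\<in>UNIV. \<Sum>j\<in>UNIV. A j i * H i j)) / 2"
    unfolding S_def by (simp add: sum.distrib sum_divide_distrib algebra_simps add_divide_distrib)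
  ultimately have "(\<Sum>i\<in>UNIV. \<Sum>j\<in>UNIV. S i j * H i j) = (\<Sum>i\<in>UNIV. \<Sum>j\<in>UNIV. A i j * H i j)"
    by simp
  with le show ?thesis by simp
qed

lemma maxpoint_elliptic:
  fixes \<phi> :: "real^'n::finite \<Rightarrow> real"
  assumes S: "open S" "x \<in> S" and mx: "\<forall>y\<in>S. \<phi> y \<le> \<phi> x"
    and d: "\<forall>z\<in>S. \<forall>i. ((\<lambda>h. \<phi> (z + h *\<^sub>R axis i 1)) has_real_derivative d1 i z) (at 0)"
    and dd: "\<forall>z\<in>S. \<forall>i j. ((\<lambda>h. d1 j (z + h *\<^sub>R axis i 1)) has_real_derivative d2 i j z) (at 0)"
    and c1: "\<forall>i. continuous_on S (d1 i)"
    and c2: "\<forall>i j. continuous_on S (d2 i j)"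
    and ell: "\<forall>\<nu>::real^'n. \<nu> \<noteq> 0 \<longrightarrow> (\<Sum>i\<in>UNIV. \<Sum>j\<in>UNIV. A i j * \<nu>$i * \<nu>$j) > 0"
  shows "(\<Sum>i\<in>UNIV. \<Sum>j\<in>UNIV. A i j * d2 i j x) \<le> 0"
  by (rule elliptic_trace[OF ell, of "\<lambda>i j. d2 i j x"])
     (auto intro: schwarz[OF S d dd c2] maxpoint_hess[OF S mx d dd c1 c2])



definition E :: "nat \<Rightarrow> real \<Rightarrow> real" where "E j = exp ^^ j"
definition P :: "nat \<Rightarrow> real \<Rightarrow> real" where "P j v = (\<Prod>i=1..j. E i v)"
fun dP :: "nat \<Rightarrow> real \<Rightarrow> real" where
  "dP 0 v = 0"
| "dP (Suc j) v = dP j v * E (Suc j) v + P j v * P (Suc j) v"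

lemma E_0 [simp]: "E 0 v = v" by (simp add: E_def)
lemma E_Suc: "E (Suc j) v = exp (E j v)" by (simp add: E_def)
lemma P_0 [simp]: "P 0 v = 1" by (simp add: P_def)
lemma P_Suc: "P (Suc j) v = P j v * E (Suc j) v" by (simp add: P_def prod.cl_ivl_Suc)

lemma E_gt: "E j v \<ge> v"
  by (induction j) (auto simp: E_Suc intro: order_trans[OF _ exp_ge_add_one_self[THEN order_trans[OF _ ], of _ _]] ,
      smt (verit) exp_ge_add_one_self)

lemma E_nonneg: "v \<ge> 0 \<Longrightarrow> E j v \<ge> 0"
  using E_gt[of v j] by linarith

lemma E_ge1: "v \<ge> 0 \<Longrightarrow> j \<ge> 1 \<Longrightarrow> E j v \<ge> 1"
proof (cases j)
  case (Suc k)
  assume "v \<ge> 0"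
  then show ?thesis using Suc E_nonneg[of v k] by (simp add: E_Suc)
qed simp

lemma E_mono: "v \<le> w \<Longrightarrow> E j v \<le> E j w"
  by (induction j) (auto simp: E_Suc)

lemma P_ge1: "v \<ge> 0 \<Longrightarrow> P j v \<ge> 1"
  unfolding P_def by (rule prod_ge_1) (auto intro: E_ge1)

lemma P_le_Suc: "v \<ge> 0 \<Longrightarrow> P j v \<le> P (Suc j) v"
  using P_ge1[of v j] E_ge1[of v "Suc j"] by (simp add: P_Suc mult_le_cancel_left1)

lemma P_mono_idx: "v \<ge> 0 \<Longrightarrow> i \<le> j \<Longrightarrow> P i v \<le> P j v"
  by (induction j) (auto simp: le_Suc_eq intro: order_trans[OF _ P_le_Suc])

lemma E_deriv: "(E j has_real_derivative P j v) (at v)"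
proof (induction j arbitrary: v)
  case 0
  then show ?case by (simp add: E_def)
next
  case (Suc j)
  have "((\<lambda>v. exp (E j v)) has_real_derivative exp (E j v) * P j v) (at v)"
    by (rule DERIV_chain2[OF DERIV_exp Suc.IH])
  moreover have "(\<lambda>v. exp (E j v)) = E (Suc j)" by (simp add: E_Suc fun_eq_iff)
  ultimately show ?case by (simp add: P_Suc E_Suc mult.commute)
qed

lemma P_deriv: "(P j has_real_derivative dP j v) (at v)"
proof (induction j)
  case 0
  then show ?case by (simp add: P_def)
next
  case (Suc j)
  have "((\<lambda>v. P j v * E (Suc j) v) has_real_derivative dP j v * E (Suc j) v + P j v * P (Suc j) v) (at v)"
    using DERIV_mult[OF Suc.IH E_deriv[of "Suc j" v]] by (simp add: mult.commute)
  moreover have "(\<lambda>v. P j v * E (Suc j) v) = P (Suc j)" by (simp add: P_Suc fun_eq_iff)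
  ultimately show ?case by simp
qed

lemma isCont_E: "isCont (E j) v" using E_deriv DERIV_isCont by blast
lemma isCont_P: "isCont (P j) v" using P_deriv DERIV_isCont by blast
lemma isCont_dP: "isCont (dP j) v"
  by (induction j) (auto intro!: continuous_intros isCont_E isCont_P)

lemma dP_bound: "v \<ge> 0 \<Longrightarrow> 0 \<le> dP j v \<and> dP j v \<le> real j * P j v * P (j - 1) v"
proof (induction j)
  case 0
  then show ?case by simp
next
  case (Suc j)
  have E1: "E (Suc j) v \<ge> 1" using E_ge1 Suc.prems by simp
  have Pj: "P j v \<ge> 1" "P (Suc j) v \<ge> 1" using P_ge1 Suc.prems by auto
  have Pjm: "P (j - 1) v \<le> P j v" using P_mono_idx Suc.prems by simp
  have "dP (Suc j) v = dP j v * E (Suc j) v + P j v * P (Suc j) v" by simp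
  also have "\<dots> \<le> (real j * P j v * P (j - 1) v) * E (Suc j) v + P j v * P (Suc j) v"
    using Suc E1 by (intro add_right_mono mult_right_mono) auto
  also have "\<dots> = real j * P (Suc j) v * P (j - 1) v + P (Suc j) v * P j v"
    by (simp add: P_Suc algebra_simps)
  also have "\<dots> \<le> real j * P (Suc j) v * P j v + P (Suc j) v * P j v"
    using Pj Pjm by (intro add_right_mono mult_left_mono) auto
  also have "\<dots> = real (Suc j) * P (Suc j) v * P (Suc j - 1) v" by (simp add: algebra_simps)
  finally show ?case using Suc E1 Pj
    by (auto intro!: add_nonneg_nonneg mult_nonneg_nonneg)
qed

lemma iterlog_0 [simp]: "iterlog 0 x = x" by (simp add: iterlog_def)
lemma iterlog_Suc: "iterlog (Suc i) x = ln (iterlog i x)" by (simp add: iterlog_def)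

lemma iterlog_E: "i \<le> j \<Longrightarrow> iterlog i (E j v) = E (j - i) v"
proof (induction i)
  case 0 then show ?case by simp
next
  case (Suc i)
  then have "j - i = Suc (j - Suc i)" by simp
  then show ?case using Suc by (simp add: iterlog_Suc E_Suc)
qed

lemma prod_iterlog_E: "(\<Prod>i=1..m. iterlog i (E (m+1) v)) = P m v"
proof -
  have "(\<Prod>i=1..m. iterlog i (E (m+1) v)) = (\<Prod>i=1..m. E (m + 1 - i) v)"
    by (rule prod.cong) (auto simp: iterlog_E)
  also have "\<dots> = (\<Prod>i=1..m. E i v)"
    by (rule prod.reindex_bij_witness[of _ "\<lambda>i. m + 1 - i" "\<lambda>i. m + 1 - i"]) auto
  finally show ?thesis by (simp add: P_def)
qed

definition qfun :: "nat \<Rightarrow> real \<Rightarrow> real \<Rightarrow> real" where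
  "qfun m \<epsilon> u = (\<Prod>i=1..m. iterlog i u)^2 * iterlog (m+1) u powr (2 + \<epsilon>)"

definition Dfun :: "nat \<Rightarrow> real \<Rightarrow> real \<Rightarrow> real" where
  "Dfun m \<epsilon> u = u * (\<Prod>i=1..m. iterlog i u)^2 * iterlog (m+1) u powr (2 + \<epsilon>)"

lemma Dfun_qfun: "Dfun m \<epsilon> u = u * qfun m \<epsilon> u"
  unfolding Dfun_def qfun_def by simp

lemma Dfun_E: "Dfun m \<epsilon> (E (m+1) v) = E (m+1) v * P m v ^ 2 * v powr (2 + \<epsilon>)"
  unfolding Dfun_def prod_iterlog_E using iterlog_E[of "m+1" "m+1" v] by simp

lemma iterlog_ge_mono:
  assumes "E j 1 \<le> x" "x \<le> y"
  shows "i \<le> j \<Longrightarrow> E (j - i) 1 \<le> iterlog i x \<and> iterlog i x \<le> iterlog i y"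
proof (induction i)
  case 0 then show ?case using assms by simp
next
  case (Suc i)
  then have IH: "E (j - i) 1 \<le> iterlog i x" "iterlog i x \<le> iterlog i y" by auto
  have ji: "j - i = Suc (j - Suc i)" using Suc.prems by simp
  have pos: "iterlog i x > 0" using IH(1) ji by (simp add: E_Suc) (smt (verit) exp_gt_zero)
  have "E (j - Suc i) 1 = ln (E (j - i) 1)" using ji by (simp add: E_Suc)
  also have "\<dots> \<le> ln (iterlog i x)"
    using IH(1) pos ji by (simp add: E_Suc ln_ge_iff)
  finally show ?case using IH pos by (simp add: iterlog_Suc)
qed

lemma qfun_mono:
  assumes "E (m+1) 1 \<le> x" "x \<le> y" "\<epsilon> > 0"
  shows "qfun m \<epsilon> x \<le> qfun m \<epsilon> y"
proof -
  have ge: "iterlog i x \<ge> 1" "iterlog i x \<le> iterlog i y" if "i \<le> m + 1" for i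
  proof -
    have "E (m + 1 - i) 1 \<le> iterlog i x" "iterlog i x \<le> iterlog i y"
      using iterlog_ge_mono[OF assms(1,2) that] by auto
    moreover have "E (m + 1 - i) 1 \<ge> 1" using E_gt[of 1 "m + 1 - i"] by simp
    ultimately show "iterlog i x \<ge> 1" "iterlog i x \<le> iterlog i y" by auto
  qed
  have "(\<Prod>i=1..m. iterlog i x) \<le> (\<Prod>i=1..m. iterlog i y)"
  proof (rule prod_mono)
    fix i assume "i \<in> {1..m}"
    then have "i \<le> m + 1" by simp
    from ge[OF this] show "0 \<le> iterlog i x \<and> iterlog i x \<le> iterlog i y" by simp
  qed
  moreover have "(\<Prod>i=1..m. iterlog i x) \<ge> 0"
  proof (rule prod_nonneg)
    fix i assume "i \<in> {1..m}"
    then have "i \<le> m + 1" by simp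
    from ge[OF this] show "0 \<le> iterlog i x" by simp
  qed
  ultimately have a: "(\<Prod>i=1..m. iterlog i x)^2 \<le> (\<Prod>i=1..m. iterlog i y)^2"
    by (rule power_mono)
  have b: "iterlog (m+1) x powr (2 + \<epsilon>) \<le> iterlog (m+1) y powr (2 + \<epsilon>)"
    by (rule powr_mono2) (use ge[of "m+1"] assms in auto)
  show ?thesis unfolding qfun_def
    by (rule mult_mono[OF a b]) auto
qed

lemma qfun_pos:
  assumes "E (m+1) 1 \<le> x"
  shows "qfun m \<epsilon> x > 0"
proof -
  have ge: "iterlog i x \<ge> 1" if "i \<le> m + 1" for i
  proof -
    have "E (m + 1 - i) 1 \<le> iterlog i x"
      using iterlog_ge_mono[OF assms order_refl that] by auto
    moreover have "E (m + 1 - i) 1 \<ge> 1" using E_gt[of 1 "m + 1 - i"] by simp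
    ultimately show ?thesis by auto
  qed
  have "(\<Prod>i=1..m. iterlog i x) > 0"
  proof (rule prod_pos)
    fix i assume "i \<in> {1..m}"
    then have "i \<le> m + 1" by simp
    from ge[OF this] show "0 < iterlog i x" by simp
  qed
  moreover have "iterlog (m+1) x powr (2 + \<epsilon>) > 0" using ge[of "m+1"] by simp
  ultimately show ?thesis unfolding qfun_def by (metis mult_pos_pos zero_less_power)
qed

lemma E1_ge1: "E j 1 \<ge> 1" using E_gt[of 1 j] by simp



lemma bar_arith1:
  fixes E1 Pm v w a N M dd :: real
  assumes E1: "E1 \<ge> 1" and Pm: "Pm \<ge> 1" and w: "0 \<le> w" "w \<le> v" and v: "1 \<le> v"
    and a: "0 < a" "1 \<le> 2 * a" and N: "N \<ge> 0" and M: "M \<ge> 0"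
    and dd: "0 \<le> dd" "dd \<le> M * (Pm * E1) * Pm"
  shows "\<bar>(Pm * E1) * (-(N * a * w))\<bar> + \<bar>dd * (N * a * w)^2 + (Pm * E1) * (N * (N + 1) * a^2 * w)\<bar>
         \<le> (2 * N + M * N^2 + N * (N + 1)) * (E1 * Pm^2 * v^2 * a^2)"
proof -
  have vv: "v \<le> v^2" using v by (simp add: power2_eq_square)
  have wv2: "w \<le> v^2" using w vv by linarith
  have Pm2: "Pm \<le> Pm^2" using Pm by (simp add: power2_eq_square)
  have t1: "\<bar>(Pm * E1) * (-(N * a * w))\<bar> \<le> 2 * N * (E1 * Pm^2 * v^2 * a^2)"
  proof -
    have eq: "\<bar>(Pm * E1) * (-(N * a * w))\<bar> = N * (E1 * Pm * a * w)"
      using E1 Pm w a N by (simp add: abs_mult)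
    have "E1 * Pm * a * w \<le> E1 * Pm^2 * a * v^2"
      using E1 Pm a w Pm2 wv2 by (intro mult_mono) auto
    also have "E1 * Pm^2 * a * v^2 \<le> E1 * Pm^2 * v^2 * a * (2 * a)"
      using E1 Pm a by (simp add: mult_le_cancel_left1)
    finally have "N * (E1 * Pm * a * w) \<le> N * (E1 * Pm^2 * v^2 * a * (2 * a))"
      using N by (rule mult_left_mono)
    then show ?thesis unfolding eq by (simp add: power2_eq_square mult_ac)
  qed
  have t2a: "dd * (N * a * w)^2 \<le> M * N^2 * (E1 * Pm^2 * v^2 * a^2)"
  proof -
    have "w^2 \<le> v^2" using w by (intro power_mono) auto
    have "dd * (N * a * w)^2 \<le> (M * (Pm * E1) * Pm) * (N * a * w)^2"
      using dd by (intro mult_right_mono) auto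
    also have "\<dots> = M * N^2 * (E1 * Pm^2 * w^2 * a^2)" by (simp add: power2_eq_square mult_ac)
    also have "\<dots> \<le> M * N^2 * (E1 * Pm^2 * v^2 * a^2)"
      using \<open>w^2 \<le> v^2\<close> E1 Pm M by (intro mult_left_mono mult_right_mono) auto
    finally show ?thesis .
  qed
  have t2b: "(Pm * E1) * (N * (N + 1) * a^2 * w) \<le> N * (N + 1) * (E1 * Pm^2 * v^2 * a^2)"
  proof -
    have "Pm * w \<le> Pm^2 * v^2" using Pm2 wv2 Pm w by (intro mult_mono) auto
    then have "E1 * (N * (N + 1) * a^2) * (Pm * w) \<le> E1 * (N * (N + 1) * a^2) * (Pm^2 * v^2)"
      using E1 N by (intro mult_left_mono) auto
    then show ?thesis by (simp add: mult_ac)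
  qed
  have nn: "0 \<le> dd * (N * a * w)^2 + (Pm * E1) * (N * (N + 1) * a^2 * w)"
    using dd E1 Pm N w by auto
  show ?thesis using t1 t2a t2b nn by (simp add: algebra_simps)
qed

lemma powr_lower:
  fixes v w x \<epsilon> :: real
  assumes v: "v \<ge> 1" and w: "0 < w" "w \<le> v" "w = x^N" and x: "x > 0" and N: "N \<ge> 1"
    and NE: "2 / real N \<le> \<epsilon>"
  shows "v powr (2 + \<epsilon>) \<ge> v^2 * x^2"
proof -
  have "v powr (2 + 2 / real N) \<le> v powr (2 + \<epsilon>)" by (rule powr_mono) (use NE v in auto)
  moreover have "v powr (2 + 2 / real N) = v^2 * v powr (2 / real N)"
    using v by (simp add: powr_add)
  moreover have "w powr (2 / real N) \<le> v powr (2 / real N)" by (rule powr_mono2) (use w in auto)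
  moreover have "w powr (2 / real N) = x^2"
  proof -
    have "w powr (2 / real N) = (x powr real N) powr (2 / real N)" using w x by (simp add: powr_realpow)
    also have "\<dots> = x powr 2" using N by (simp add: powr_powr)
    also have "\<dots> = x^2" using x by simp
    finally show ?thesis .
  qed
  ultimately show ?thesis using v by (metis mult_left_mono order_trans zero_le_power2)
qed

lemma powr_lower2:
  fixes v \<epsilon> :: real
  assumes "v \<ge> 1" "\<epsilon> > 0"
  shows "v powr (2 + \<epsilon>) \<ge> v^2"
proof -
  have "v powr 2 \<le> v powr (2 + \<epsilon>)" by (rule powr_mono) (use assms in auto)
  then show ?thesis using assms by simp
qed

lemma dinvpow:
  fixes a s :: real
  assumes s: "s > 0" and M: "M \<ge> 1"
  shows "((\<lambda>s. a / s^M) has_real_derivative -(real M * a / s^(M+1))) (at s)"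
proof -
  obtain k where k: "M = Suc k" using M by (cases M) auto
  have "((\<lambda>s. a / s^M) has_real_derivative (0 * s^M - a * (real M * s^(M - Suc 0))) / (s^M * s^M)) (at s)"
    by (intro DERIV_divide DERIV_const DERIV_pow) (use s in auto)
  moreover have "(0 * s^M - a * (real M * s^(M - Suc 0))) / (s^M * s^M) = -(real M * a / s^(M+1))"
    unfolding k using s by (simp add: field_simps power_Suc)
  ultimately show ?thesis by simp
qed

lemma divle: "0 \<le> X \<Longrightarrow> 1 \<le> s \<Longrightarrow> X / s \<le> (X::real)"
  by (simp add: divide_le_eq mult_le_cancel_left1)
lemma vsq: "1 \<le> v \<Longrightarrow> v \<le> (v::real)^2"
  by (simp add: power2_eq_square)
lemma t3: "1 \<le> Pm \<Longrightarrow> 1 \<le> (E1::real) \<Longrightarrow> B \<le> v^2 \<Longrightarrow> 0 \<le> B \<Longrightarrow> Pm * E1 * B \<le> E1 * Pm^2 * v^2"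
proof -
  assume a: "1 \<le> Pm" "1 \<le> E1" "B \<le> v^2" "0 \<le> B"
  have "Pm * B \<le> Pm^2 * v^2" using a by (intro mult_mono) (auto simp: power2_eq_square)
  then have "E1 * (Pm * B) \<le> E1 * (Pm^2 * v^2)" using a by (intro mult_left_mono) auto
  then show ?thesis by (simp add: mult_ac)
qed

lemma barrier:
  fixes m :: nat and \<epsilon> K U :: real
  assumes \<epsilon>: "\<epsilon> > 0" and K: "K > 0"
  shows "\<exists>G G1 G2 :: real \<Rightarrow> real.
    (\<forall>s>0. (G has_real_derivative G1 s) (at s) \<and> (G1 has_real_derivative G2 s) (at s) \<and> isCont G2 s)
    \<and> (\<forall>s>0. G s \<ge> U \<and> G s \<ge> E (m+1) 1)
    \<and> (\<forall>s. 0 < s \<and> s \<le> 2 \<longrightarrow> \<bar>G1 s\<bar> + \<bar>G2 s\<bar> \<le> Dfun m \<epsilon> (G s) / K)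
    \<and> (\<forall>s>0. \<bar>G1 s\<bar> \<le> Dfun m \<epsilon> (G s) / K)
    \<and> (\<forall>s. 0 < s \<and> s \<le> 1 \<longrightarrow> G s \<ge> 1 / s)"
proof -
  define N :: nat where "N = nat \<lceil>2 / \<epsilon>\<rceil> + 1"
  have N1: "N \<ge> 1" unfolding N_def by simp
  have "2 / \<epsilon> > 0" using \<epsilon> by simp
  then have c0: "\<lceil>2 / \<epsilon>\<rceil> \<ge> 0" by (subst zero_le_ceiling) linarith
  have "real N = real_of_int \<lceil>2 / \<epsilon>\<rceil> + 1" unfolding N_def using c0 by simp
  then have "real N \<ge> 2 / \<epsilon>" using le_of_int_ceiling[of "2 / \<epsilon>"] by linarith
  then have NE: "2 / real N \<le> \<epsilon>" using \<epsilon> N1 by (simp add: field_simps)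
  define C0 where "C0 = 2 * real N + real (m+1) * (real N)^2 + real N * (real N + 1)"
  have C0: "C0 \<ge> 0" unfolding C0_def by simp
  have KC: "K * C0 \<ge> 0" using K C0 by (simp add: mult_nonneg_nonneg)
  define \<gamma> where "\<gamma> = sqrt (K * C0) + 1"
  have \<gamma>1: "\<gamma> \<ge> 1" unfolding \<gamma>_def using KC by simp
  have \<gamma>2: "\<gamma>^2 \<ge> K * C0"
  proof -
    have "K * C0 = (sqrt (K * C0))^2" using KC by simp
    also have "\<dots> \<le> \<gamma>^2" unfolding \<gamma>_def using KC by (intro power_mono) auto
    finally show ?thesis .
  qed
  define B where "B = \<bar>U\<bar> + 1 + K * real N * \<gamma>^N"
  have KNG: "K * real N * \<gamma>^N \<ge> 0" using K \<gamma>1 by (intro mult_nonneg_nonneg) auto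
  have B1: "B \<ge> 1" unfolding B_def using KNG by linarith
  have BU: "B \<ge> U" unfolding B_def using KNG abs_ge_self[of U] by linarith
  have BK: "B \<ge> K * real N * \<gamma>^N" unfolding B_def by simp
  define v where "v s = \<gamma>^N / s^N + B" for s :: real
  define v1 where "v1 s = -(real N * \<gamma>^N / s^(N+1))" for s :: real
  define v2 where "v2 s = real N * (real N + 1) * \<gamma>^N / s^(N+2)" for s :: real
  define G where "G s = E (m+1) (v s)" for s
  define G1 where "G1 s = P (m+1) (v s) * v1 s" for s
  define G2 where "G2 s = dP (m+1) (v s) * (v1 s)^2 + P (m+1) (v s) * v2 s" for s
  have dv: "(v has_real_derivative v1 s) (at s)" if "s > 0" for s
  proof -
    have "((\<lambda>s. \<gamma>^N / s^N + B) has_real_derivative v1 s + 0) (at s)"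
      unfolding v1_def using that
      by (intro DERIV_add dinvpow DERIV_const N1) auto
    then show ?thesis unfolding v_def[abs_def] by simp
  qed
  have dv1: "(v1 has_real_derivative v2 s) (at s)" if "s > 0" for s
  proof -
    have "((\<lambda>s. -(real N * \<gamma>^N / s^(N+1))) has_real_derivative -(-(real (N+1) * (real N * \<gamma>^N) / s^(N+1+1)))) (at s)"
      using that by (intro DERIV_minus dinvpow) auto
    moreover have "-(-(real (N+1) * (real N * \<gamma>^N) / s^(N+1+1))) = v2 s" unfolding v2_def by (simp add: algebra_simps)
    ultimately have "((\<lambda>s. -(real N * \<gamma>^N / s^(N+1))) has_real_derivative v2 s) (at s)" by simp
    then show ?thesis unfolding v1_def[abs_def] .
  qed
  have cont: "isCont v s" "isCont v1 s" "isCont v2 s" if "s > 0" for s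
    using dv[OF that] dv1[OF that] DERIV_isCont apply blast+
    unfolding v2_def[abs_def] using that by (intro continuous_intros) auto
  have dG: "(G has_real_derivative G1 s) (at s)" if "s > 0" for s
    unfolding G_def[abs_def] G1_def by (rule DERIV_chain2[OF E_deriv dv[OF that]])
  have dG1: "(G1 has_real_derivative G2 s) (at s)" if "s > 0" for s
  proof -
    have "((\<lambda>s. P (m+1) (v s) * v1 s) has_real_derivative
        (dP (m+1) (v s) * v1 s) * v1 s + v2 s * P (m+1) (v s)) (at s)"
      by (rule DERIV_mult[OF DERIV_chain2[OF P_deriv dv[OF that]] dv1[OF that]])
    then show ?thesis unfolding G1_def[abs_def] G2_def by (simp add: power2_eq_square mult_ac)
  qed
  have cG2: "isCont G2 s" if "s > 0" for s
    unfolding G2_def[abs_def]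
    using cont[OF that] isCont_o2[OF cont(1)[OF that] isCont_dP] isCont_o2[OF cont(1)[OF that] isCont_P]
      isCont_o2[OF cont(1)[OF that] isCont_E]
    by (auto intro!: continuous_intros)
  have pw: "v s \<ge> 1 \<and> v s \<ge> B \<and> 0 < \<gamma>^N / s^N \<and> \<gamma>^N / s^N \<le> v s" if "s > 0" for s
  proof -
    have w0: "0 < \<gamma>^N / s^N" using that \<gamma>1 by simp
    then show ?thesis unfolding v_def using B1 by auto
  qed
  have Gge: "G s \<ge> U \<and> G s \<ge> E (m+1) 1" if "s > 0" for s
    using pw[OF that] E_gt[of "v s" "m+1"] E_mono[of 1 "v s" "m+1"] BU unfolding G_def by auto
  have Dlow: "Dfun m \<epsilon> (G s) \<ge> E (m+1) (v s) * P m (v s)^2 * (v s)^2 * (\<gamma> / s)^2"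
      and Dlow2: "Dfun m \<epsilon> (G s) \<ge> E (m+1) (v s) * P m (v s)^2 * (v s)^2" if "s > 0" for s
  proof -
    have p: "(v s) powr (2 + \<epsilon>) \<ge> (v s)^2 * (\<gamma> / s)^2"
      by (rule powr_lower[OF _ _ _ _ _ N1 NE]) (use pw[OF that] that \<gamma>1 in \<open>auto simp: power_divide\<close>)
    have p2: "(v s) powr (2 + \<epsilon>) \<ge> (v s)^2" by (rule powr_lower2) (use pw[OF that] \<epsilon> in auto)
    have c: "E (m+1) (v s) * P m (v s)^2 \<ge> 0" using E_nonneg[of "v s"] pw[OF that] by simp
    show "Dfun m \<epsilon> (G s) \<ge> E (m+1) (v s) * P m (v s)^2 * (v s)^2 * (\<gamma> / s)^2"
      unfolding G_def Dfun_E using mult_left_mono[OF p c] by (simp add: mult_ac)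
    show "Dfun m \<epsilon> (G s) \<ge> E (m+1) (v s) * P m (v s)^2 * (v s)^2"
      unfolding G_def Dfun_E using mult_left_mono[OF p2 c] by (simp add: mult_ac)
  qed
  have small: "\<bar>G1 s\<bar> + \<bar>G2 s\<bar> \<le> Dfun m \<epsilon> (G s) / K" if "0 < s" "s \<le> 2" for s
  proof -
    define a where "a = 1 / s"
    define w where "w = \<gamma>^N / s^N"
    have a: "0 < a" "1 \<le> 2 * a" unfolding a_def using that by auto
    have w: "0 \<le> w" "w \<le> v s" using pw[OF that(1)] unfolding w_def by auto
    have v1e: "v1 s = -(real N * a * w)" unfolding v1_def a_def w_def by (simp add: field_simps)
    have v2e: "v2 s = real N * (real N + 1) * a^2 * w" unfolding v2_def a_def w_def by (simp add: field_simps power2_eq_square)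
    have PS: "P (m+1) (v s) = P m (v s) * E (m+1) (v s)" using P_Suc[of m "v s"] by simp
    have vpos: "v s \<ge> 0" using pw[OF that(1)] by simp
    have ddb: "0 \<le> dP (m+1) (v s)" "dP (m+1) (v s) \<le> real (m+1) * (P m (v s) * E (m+1) (v s)) * P m (v s)"
      using dP_bound[OF vpos, of "m+1"] PS by auto
    have E1: "E (m+1) (v s) \<ge> 1" using E_ge1[OF vpos, of "m+1"] by simp
    have "\<bar>G1 s\<bar> + \<bar>G2 s\<bar> = \<bar>(P m (v s) * E (m+1) (v s)) * (-(real N * a * w))\<bar>
        + \<bar>dP (m+1) (v s) * (real N * a * w)^2 + (P m (v s) * E (m+1) (v s)) * (real N * (real N + 1) * a^2 * w)\<bar>"
      unfolding G1_def G2_def PS v1e v2e by simp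
    also have "\<dots> \<le> C0 * (E (m+1) (v s) * P m (v s)^2 * (v s)^2 * a^2)"
      unfolding C0_def
      by (rule bar_arith1[OF E1 P_ge1[OF vpos] w _ a _ _ ddb]) (use pw[OF that(1)] in auto)
    also have "\<dots> \<le> (\<gamma>^2 / K) * (E (m+1) (v s) * P m (v s)^2 * (v s)^2 * a^2)"
    proof (rule mult_right_mono)
      show "C0 \<le> \<gamma>^2 / K" using \<gamma>2 K by (simp add: field_simps mult.commute)
      show "0 \<le> E (m+1) (v s) * P m (v s)^2 * (v s)^2 * a^2" using E_nonneg[OF vpos] by simp
    qed
    also have "\<dots> = (E (m+1) (v s) * P m (v s)^2 * (v s)^2 * (\<gamma> / s)^2) / K"
      unfolding a_def by (simp add: power_divide field_simps)
    also have "\<dots> \<le> Dfun m \<epsilon> (G s) / K" using Dlow[OF that(1)] K by (simp add: divide_right_mono)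
    finally show ?thesis .
  qed
  have large: "\<bar>G1 s\<bar> \<le> Dfun m \<epsilon> (G s) / K" if "1 \<le> s" for s
  proof -
    have s0: "s > 0" using that by simp
    have vpos: "v s \<ge> 0" using pw[OF s0] by simp
    define Pm where "Pm = P m (v s)"
    define E1 where "E1 = E (m+1) (v s)"
    have Pm: "Pm \<ge> 1" unfolding Pm_def using P_ge1[OF vpos] .
    have E1: "E1 \<ge> 1" unfolding E1_def using E_ge1[OF vpos] by simp
    have PS: "P (m+1) (v s) = Pm * E1" unfolding Pm_def E1_def using P_Suc[of m "v s"] by simp
    have wle: "\<gamma>^N / s^N \<le> \<gamma>^N" using that \<gamma>1 by (simp add: field_simps one_le_power)
    have pos: "real N * \<gamma>^N / s^(N+1) \<ge> 0" using \<gamma>1 that by simp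
    have "\<bar>v1 s\<bar> = real N * \<gamma>^N / s^(N+1)" unfolding v1_def abs_minus_cancel using pos by (rule abs_of_nonneg)
    also have "\<dots> = real N * (\<gamma>^N / s^N) / s" using that by (simp add: field_simps)
    also have "\<dots> \<le> real N * (\<gamma>^N / s^N)" by (rule divle) (use that \<gamma>1 in auto)
    also have "\<dots> \<le> real N * \<gamma>^N" using wle by (intro mult_left_mono) auto
    finally have v1b: "\<bar>v1 s\<bar> \<le> real N * \<gamma>^N" .
    have "K * \<bar>G1 s\<bar> = Pm * E1 * (K * \<bar>v1 s\<bar>)" unfolding G1_def PS using Pm E1 K by (simp add: abs_mult)
    also have "\<dots> \<le> Pm * E1 * B"
    proof -
      have "K * \<bar>v1 s\<bar> \<le> K * (real N * \<gamma>^N)" using v1b K by (intro mult_left_mono) auto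
      also have "\<dots> \<le> B" using BK by (simp add: mult.assoc)
      finally show ?thesis using Pm E1 by (intro mult_left_mono) auto
    qed
    also have "\<dots> \<le> E1 * Pm^2 * (v s)^2"
    proof -
      have "B \<le> (v s)^2" using pw[OF s0] vsq[of "v s"] by linarith
      then show ?thesis using t3 Pm E1 B1 by simp
    qed
    also have "\<dots> \<le> Dfun m \<epsilon> (G s)" using Dlow2[OF s0] unfolding Pm_def E1_def by (simp add: mult_ac)
    finally show ?thesis using K by (simp add: field_simps)
  qed
  have blow: "G s \<ge> 1 / s" if "0 < s" "s \<le> 1" for s
  proof -
    have g: "\<gamma> / s \<ge> 1" using that \<gamma>1 by (simp add: field_simps)
    have "1 / s \<le> \<gamma> / s" using that \<gamma>1 by (simp add: divide_right_mono)
    also have "\<gamma> / s \<le> (\<gamma> / s)^N" using g N1 by (metis power_one_right power_increasing)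
    also have "\<dots> \<le> v s" using pw[OF that(1)] by (simp add: power_divide)
    also have "\<dots> \<le> G s" unfolding G_def by (rule E_gt)
    finally show ?thesis .
  qed
  have A: "\<forall>s>0. (G has_real_derivative G1 s) (at s) \<and> (G1 has_real_derivative G2 s) (at s) \<and> isCont G2 s"
    using dG dG1 cG2 by blast
  have Bf: "\<forall>s>0. G s \<ge> U \<and> G s \<ge> E (m+1) 1" using Gge by blast
  have C: "\<forall>s. 0 < s \<and> s \<le> 2 \<longrightarrow> \<bar>G1 s\<bar> + \<bar>G2 s\<bar> \<le> Dfun m \<epsilon> (G s) / K" using small by blast
  have Dd: "\<forall>s>0. \<bar>G1 s\<bar> \<le> Dfun m \<epsilon> (G s) / K"
  proof (intro allI impI)
    fix s :: real assume s: "s > 0"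
    show "\<bar>G1 s\<bar> \<le> Dfun m \<epsilon> (G s) / K"
    proof (cases "s \<le> 2")
      case True
      have "\<bar>G1 s\<bar> \<le> \<bar>G1 s\<bar> + \<bar>G2 s\<bar>" by simp
      also have "\<dots> \<le> Dfun m \<epsilon> (G s) / K" using small s True by blast
      finally show ?thesis .
    next
      case False
      then show ?thesis using large by simp
    qed
  qed
  have Ee: "\<forall>s. 0 < s \<and> s \<le> 1 \<longrightarrow> G s \<ge> 1 / s" using blow by blast
  show ?thesis using A Bf C Dd Ee by blast
qed



lemma cont_slice:
  assumes "continuous_on (UNIV \<times> {0<..}) (\<lambda>(x,t). F x t)" "t > (0::real)"
  shows "continuous_on S (\<lambda>x. F x t)"
proof -
  have "continuous_on S (\<lambda>x. (\<lambda>(x,t). F x t) (x, t))"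
    by (rule continuous_on_compose2[OF assms(1)]) (use assms(2) in \<open>auto intro!: continuous_intros\<close>)
  then show ?thesis by simp
qed

lemma Q_sub_cball:
  fixes x x0 :: "real^'n::finite"
  assumes "\<forall>i. \<bar>x$i - x0$i\<bar> \<le> (1::real)"
  shows "x \<in> cball x0 (real CARD('n::finite))"
proof -
  have "norm (x - x0) \<le> (\<Sum>i\<in>UNIV. \<bar>(x - x0)$i\<bar>)" by (rule norm_le_l1_cart)
  also have "\<dots> \<le> (\<Sum>i\<in>(UNIV::'n set). 1)" by (rule sum_mono) (use assms in auto)
  finally show ?thesis by (simp add: dist_norm norm_minus_commute)
qed

lemma notKx:
  fixes x x0 :: "real^'n::finite"
  assumes "\<not> (\<forall>i. \<bar>x$i - x0$i\<bar> \<le> 1 - \<delta>)"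
  shows "\<exists>i. 1 - \<bar>x$i - x0$i\<bar> \<le> \<delta>"
proof -
  from assms obtain i where "\<not> \<bar>x$i - x0$i\<bar> \<le> 1 - \<delta>" by blast
  then have "1 - \<bar>x$i - x0$i\<bar> \<le> \<delta>" by linarith
  then show ?thesis by blast
qed

lemma comparison:
  fixes a :: "'n::finite \<Rightarrow> 'n \<Rightarrow> real^'n \<Rightarrow> real" and b :: "'n \<Rightarrow> real^'n \<Rightarrow> real"
    and f :: "real^'n \<Rightarrow> real \<Rightarrow> real" and u W Wt :: "real^'n \<Rightarrow> real \<Rightarrow> real"
  assumes sol: "classical_solution a b f g u"
    and ell: "elliptic_pointwise a"
    and Qdef: "Q = {x. \<forall>i. \<bar>x$i - x0$i\<bar> < 1}"
    and Wc: "continuous_on (Q \<times> {0<..}) (\<lambda>(x,t). W x t)"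
    and Wt: "\<forall>x\<in>Q. \<forall>t>0. ((\<lambda>s. W x s) has_real_derivative Wt x t) (at t)"
    and Wd: "\<forall>x\<in>Q. \<forall>t>0. \<forall>i. ((\<lambda>h. W (x + h *\<^sub>R axis i 1) t) has_real_derivative DW i x t) (at 0)"
    and Wdd: "\<forall>x\<in>Q. \<forall>t>0. \<forall>i j. ((\<lambda>h. DW j (x + h *\<^sub>R axis i 1) t) has_real_derivative D2W i j x t) (at 0)"
    and Wc1: "\<forall>t>0. \<forall>i. continuous_on Q (\<lambda>x. DW i x t)"
    and Wc2: "\<forall>t>0. \<forall>i j. continuous_on Q (\<lambda>x. D2W i j x t)"
    and super: "\<forall>x\<in>Q. \<forall>t>0. (\<Sum>i\<in>UNIV. \<Sum>j\<in>UNIV. a i j x * D2W i j x t) + (\<Sum>i\<in>UNIV. b i x * DW i x t) + f x (W x t) < Wt x t"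
    and blow: "\<forall>V. \<exists>\<delta>>0. \<forall>x\<in>Q. \<forall>t>0. (t \<le> \<delta> \<or> (\<exists>i. 1 - \<bar>x$i - x0$i\<bar> \<le> \<delta>)) \<longrightarrow> V < W x t"
  shows "\<forall>x\<in>Q. \<forall>t>0. u x t \<le> W x t"
proof (rule ccontr)
  assume "\<not> (\<forall>x\<in>Q. \<forall>t>0. u x t \<le> W x t)"
  then obtain x1 t1 where x1: "x1 \<in> Q" and t1: "t1 > 0" and bad: "u x1 t1 > W x1 t1" by auto
  from sol obtain Du D2u Dt where
    ucont: "continuous_on (UNIV \<times> {0..}) (\<lambda>(x,t). u x t)"
    and pde: "\<forall>x. \<forall>t>0.
            ((\<lambda>s. u x s) has_real_derivative Dt x t) (at t) \<and>
            (\<forall>i. ((\<lambda>h. u (x + h *\<^sub>R axis i 1) t) has_real_derivative Du i x t) (at 0)) \<and>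
            (\<forall>i j. ((\<lambda>h. Du j (x + h *\<^sub>R axis i 1) t) has_real_derivative D2u i j x t) (at 0)) \<and>
            Dt x t = (\<Sum>i\<in>UNIV. \<Sum>j\<in>UNIV. a i j x * D2u i j x t)
                     + (\<Sum>i\<in>UNIV. b i x * Du i x t) + f x (u x t)"
    and cDu: "\<forall>i. continuous_on (UNIV \<times> {0<..}) (\<lambda>(x,t). Du i x t)"
    and cD2u: "\<forall>i j. continuous_on (UNIV \<times> {0<..}) (\<lambda>(x,t). D2u i j x t)"
    unfolding classical_solution_def by blast
  define n where "n = real CARD('n)"
  have Qc: "x \<in> cball x0 n" if "x \<in> Q" for x
    unfolding n_def by (rule Q_sub_cball) (use that Qdef in \<open>auto simp: less_imp_le\<close>)
  define Kb where "Kb = cball x0 n \<times> {0..t1}"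
  have "compact Kb" unfolding Kb_def by (intro compact_Times compact_cball compact_Icc)
  moreover have "continuous_on Kb (\<lambda>(x,t). u x t)"
    by (rule continuous_on_subset[OF ucont]) (auto simp: Kb_def)
  ultimately have "bounded ((\<lambda>(x,t). u x t) ` Kb)" by (intro compact_imp_bounded compact_continuous_image)
  then obtain Ub where Ub: "\<And>p. p \<in> Kb \<Longrightarrow> norm ((\<lambda>(x,t). u x t) p) \<le> Ub" unfolding bounded_iff by blast
  have uUb: "u x t \<le> Ub" if "x \<in> Q" "0 \<le> t" "t \<le> t1" for x t
    using Ub[of "(x,t)"] Qc[OF that(1)] that unfolding Kb_def by auto
  obtain \<delta>0 where \<delta>0: "\<delta>0 > 0" "\<forall>x\<in>Q. \<forall>t>0. (t \<le> \<delta>0 \<or> (\<exists>i. 1 - \<bar>x$i - x0$i\<bar> \<le> \<delta>0)) \<longrightarrow> Ub < W x t"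
    using blow by blast
  define \<delta> where "\<delta> = min \<delta>0 (min (t1/2) (1/2))"
  have \<delta>: "0 < \<delta>" "\<delta> \<le> \<delta>0" "\<delta> < t1" "\<delta> < 1" unfolding \<delta>_def using \<delta>0 t1 by auto
  have Wbig: "u x t < W x t" if "x \<in> Q" "0 < t" "t \<le> t1" "t \<le> \<delta> \<or> (\<exists>i. 1 - \<bar>x$i - x0$i\<bar> \<le> \<delta>)" for x t
  proof -
    have "t \<le> \<delta>0 \<or> (\<exists>i. 1 - \<bar>x$i - x0$i\<bar> \<le> \<delta>0)" using that(4) \<delta>(2) by (meson order_trans)
    then have "Ub < W x t" using \<delta>0(2) that(1,2) by blast
    moreover have "u x t \<le> Ub" using uUb that by simp
    ultimately show ?thesis by simp
  qed
  define Kx where "Kx = {x. \<forall>i. \<bar>x$i - x0$i\<bar> \<le> 1 - \<delta>}"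
  have KxQ: "Kx \<subseteq> Q"
  proof
    fix x assume "x \<in> Kx"
    then have le: "\<bar>x$i - x0$i\<bar> \<le> 1 - \<delta>" for i unfolding Kx_def by blast
    have "\<bar>x$i - x0$i\<bar> < 1" for i using le[of i] \<delta>(1) by linarith
    then show "x \<in> Q" unfolding Qdef by blast
  qed
  have "closed Kx" unfolding Kx_def
    by (intro closed_Collect_all closed_Collect_le continuous_intros)
  moreover have "bounded Kx" using KxQ Qc by (meson bounded_cball bounded_subset subsetI subsetD)
  ultimately have cKx: "compact Kx" by (simp add: compact_eq_bounded_closed)
  define Kt where "Kt = Kx \<times> {\<delta>..t1}"
  have cKt: "compact Kt" unfolding Kt_def using cKx by (intro compact_Times compact_Icc)
  define w where "w x t = u x t - W x t" for x t
  have wcont: "continuous_on Kt (\<lambda>p. w (fst p) (snd p))"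
  proof -
    have "continuous_on Kt (\<lambda>(x,t). u x t)" by (rule continuous_on_subset[OF ucont]) (use \<delta> in \<open>auto simp: Kt_def\<close>)
    moreover have "continuous_on Kt (\<lambda>(x,t). W x t)"
      by (rule continuous_on_subset[OF Wc]) (use KxQ \<delta> in \<open>auto simp: Kt_def\<close>)
    ultimately have "continuous_on Kt (\<lambda>p. (\<lambda>(x,t). u x t) p - (\<lambda>(x,t). W x t) p)"
      by (intro continuous_on_diff)
    then show ?thesis unfolding w_def by (simp add: case_prod_beta)
  qed
  define Z where "Z = Kt \<inter> (\<lambda>p. w (fst p) (snd p)) -` {0..}"
  have "closed Z" unfolding Z_def
    by (rule continuous_closed_preimage[OF wcont compact_imp_closed[OF cKt] closed_atLeast])
  then have cZ: "compact Z" using cKt by (metis Z_def compact_Int_closed inf.absorb_iff2 inf_le1)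
  define T where "T = snd ` Z"
  have cT: "compact T" unfolding T_def using cZ by (intro compact_continuous_image continuous_intros)
  have x1Kx: "x1 \<in> Kx"
  proof (rule ccontr)
    assume "x1 \<notin> Kx"
    then obtain i where "\<bar>x1$i - x0$i\<bar> > 1 - \<delta>" unfolding Kx_def by (auto simp: not_le)
    then have "1 - \<bar>x1$i - x0$i\<bar> \<le> \<delta>" by linarith
    then have "u x1 t1 < W x1 t1" using Wbig[OF x1 t1 order_refl] by blast
    with bad show False by simp
  qed
  have "(x1, t1) \<in> Z" unfolding Z_def Kt_def w_def using x1Kx bad \<delta> by auto
  then have "t1 \<in> T" unfolding T_def by force
  then obtain ts where tsT: "ts \<in> T" and tsmin: "\<forall>t\<in>T. ts \<le> t"
    using compact_attains_inf[OF cT] by blast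
  from tsT obtain xs where "(xs, ts) \<in> Z" unfolding T_def by force
  then have xsKx: "xs \<in> Kx" and ts: "\<delta> \<le> ts" "ts \<le> t1" and wxs: "w xs ts \<ge> 0"
    unfolding Z_def Kt_def by auto
  have xsQ: "xs \<in> Q" using xsKx KxQ by blast
  have ts0: "ts > 0" using ts \<delta> by simp
  have neg: "w x t < 0" if "x \<in> Q" "0 < t" "t < ts" for x t
  proof (cases "t \<le> \<delta> \<or> x \<notin> Kx")
    case True
    then have "t \<le> \<delta> \<or> (\<exists>i. 1 - \<bar>x$i - x0$i\<bar> \<le> \<delta>)" unfolding Kx_def using notKx by blast
    then show ?thesis using Wbig[OF that(1,2)] that ts unfolding w_def by simp
  next
    case False
    show ?thesis
    proof (rule ccontr)
      assume "\<not> w x t < 0"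
      then have "(x, t) \<in> Z" unfolding Z_def Kt_def using False that ts by auto
      then have "t \<in> T" unfolding T_def by force
      then show False using tsmin that by force
    qed
  qed
  have tsd: "ts > \<delta>"
  proof -
    have "u xs \<delta> < W xs \<delta>" using Wbig[OF xsQ \<delta>(1)] \<delta> by simp
    then have "w xs \<delta> < 0" unfolding w_def by simp
    then show ?thesis using wxs ts by (metis le_less not_le)
  qed
  have wderiv: "((\<lambda>s. w x s) has_real_derivative Dt x t - Wt x t) (at t)" if "x \<in> Q" "t > 0" for x t
  proof -
    have "((\<lambda>s. u x s) has_real_derivative Dt x t) (at t)" using pde that by blast
    moreover have "((\<lambda>s. W x s) has_real_derivative Wt x t) (at t)" using Wt that by blast
    ultimately show ?thesis unfolding w_def by (rule DERIV_diff)
  qed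
  have nonpos: "w x ts \<le> 0" if "x \<in> Q" for x
  proof (rule ccontr)
    assume "\<not> w x ts \<le> 0"
    then have pos: "w x ts > 0" by simp
    have "isCont (\<lambda>s. w x s) ts" using wderiv[OF that ts0] DERIV_isCont by blast
    then obtain d where d: "d > 0" "\<And>s. norm (s - ts) < d \<Longrightarrow> \<bar>w x s - w x ts\<bar> < w x ts"
      unfolding continuous_at_real_range using pos by blast
    define s where "s = ts - min d (ts - \<delta>) / 2"
    have s: "0 < s" "s < ts" "norm (s - ts) < d" unfolding s_def using d tsd \<delta> by auto
    have "w x s > 0" using d(2)[OF s(3)] by linarith
    with neg[OF that s(1,2)] show False by simp
  qed
  have wxs0: "w xs ts = 0" using nonpos[OF xsQ] wxs by simp
  have tder: "Dt xs ts - Wt xs ts \<ge> 0"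
  proof (rule ccontr)
    assume "\<not> Dt xs ts - Wt xs ts \<ge> 0"
    then have "Dt xs ts - Wt xs ts < 0" by simp
    from DERIV_neg_dec_left[OF wderiv[OF xsQ ts0] this] obtain d where
      d: "d > 0" "\<And>h. h > 0 \<Longrightarrow> h < d \<Longrightarrow> w xs ts < w xs (ts - h)" by blast
    define h where "h = min d ts / 2"
    have h: "h > 0" "h < d" "ts - h > 0" "ts - h < ts" unfolding h_def using d ts0 by auto
    have "w xs (ts - h) > 0" using d(2)[OF h(1,2)] wxs0 by simp
    with neg[OF xsQ h(3,4)] show False by simp
  qed
  have "Q = (\<Inter>i\<in>UNIV. {x. \<bar>x$i - x0$i\<bar> < 1})" unfolding Qdef by auto
  moreover have "open {x::real^'n. \<bar>x$i - x0$i\<bar> < 1}" for i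
    by (intro open_Collect_less continuous_intros)
  ultimately have oQ: "open Q" by (simp add: open_INT)
  define d1 where "d1 i x = Du i x ts - DW i x ts" for i x
  define d2 where "d2 i j x = D2u i j x ts - D2W i j x ts" for i j x
  have mx: "\<forall>y\<in>Q. w y ts \<le> w xs ts" using nonpos wxs0 by simp
  have pd: "\<forall>z\<in>Q. \<forall>i. ((\<lambda>h. w (z + h *\<^sub>R axis i 1) ts) has_real_derivative d1 i z) (at 0)"
    unfolding w_def d1_def using pde Wd ts0 by (auto intro!: DERIV_diff)
  have pdd: "\<forall>z\<in>Q. \<forall>i j. ((\<lambda>h. d1 j (z + h *\<^sub>R axis i 1)) has_real_derivative d2 i j z) (at 0)"
    unfolding d1_def d2_def using pde Wdd ts0 by (auto intro!: DERIV_diff)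
  have c1: "\<forall>i. continuous_on Q (d1 i)"
    unfolding d1_def[abs_def] using cont_slice[OF cDu[rule_format] ts0] Wc1 ts0
    by (auto intro!: continuous_on_diff)
  have c2: "\<forall>i j. continuous_on Q (d2 i j)"
    unfolding d2_def[abs_def] using cont_slice[OF cD2u[rule_format] ts0] Wc2 ts0
    by (auto intro!: continuous_on_diff)
  have ellx: "\<forall>\<nu>::real^'n. \<nu> \<noteq> 0 \<longrightarrow> (\<Sum>i\<in>UNIV. \<Sum>j\<in>UNIV. a i j xs * \<nu>$i * \<nu>$j) > 0"
    using ell unfolding elliptic_pointwise_def by blast
  have grad: "d1 i xs = 0" for i
    by (rule maxpoint_grad[OF oQ xsQ mx pd pdd c1 c2])
  have hess: "(\<Sum>i\<in>UNIV. \<Sum>j\<in>UNIV. a i j xs * d2 i j xs) \<le> 0"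
    by (rule maxpoint_elliptic[OF oQ xsQ mx pd pdd c1 c2 ellx])
  have uW: "u xs ts = W xs ts" using wxs0 unfolding w_def by simp
  have DuW: "Du i xs ts = DW i xs ts" for i using grad[of i] unfolding d1_def by simp
  have "Dt xs ts = (\<Sum>i\<in>UNIV. \<Sum>j\<in>UNIV. a i j xs * D2u i j xs ts)
                     + (\<Sum>i\<in>UNIV. b i xs * Du i xs ts) + f xs (u xs ts)"
    using pde ts0 by blast
  also have "\<dots> = (\<Sum>i\<in>UNIV. \<Sum>j\<in>UNIV. a i j xs * d2 i j xs)
       + ((\<Sum>i\<in>UNIV. \<Sum>j\<in>UNIV. a i j xs * D2W i j xs ts) + (\<Sum>i\<in>UNIV. b i xs * DW i xs ts) + f xs (W xs ts))"
    unfolding d2_def uW DuW by (simp add: right_diff_distrib sum_subtractf)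
  also have "\<dots> < 0 + Wt xs ts" using hess super xsQ ts0 by (intro add_le_less_mono) auto
  finally show False using tder by simp
qed



lemma D_super:
  fixes c d :: "'n::finite \<Rightarrow> real"
  assumes \<epsilon>: "\<epsilon> > 0" and a: "a \<ge> E (m+1) 1" and c: "\<And>i. c i \<ge> E (m+1) 1" and d: "\<And>i. d i \<ge> E (m+1) 1"
  shows "Dfun m \<epsilon> a + (\<Sum>i\<in>UNIV. Dfun m \<epsilon> (c i) + Dfun m \<epsilon> (d i)) \<le> Dfun m \<epsilon> (a + (\<Sum>i\<in>UNIV. c i + d i))"
proof -
  define S where "S = a + (\<Sum>i\<in>UNIV. c i + d i)"
  have T1: "E (m+1) 1 \<ge> 1" by (rule E1_ge1)
  have cd0: "c i + d i \<ge> 0" for i using c[of i] d[of i] T1 by linarith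
  have sum0: "(\<Sum>i\<in>UNIV. c i + d i) \<ge> 0" using cd0 by (simp add: sum_nonneg)
  have le_cd: "c i + d i \<le> (\<Sum>i\<in>UNIV. c i + d i)" for i
    by (rule member_le_sum) (use cd0 in auto)
  have aS: "a \<le> S" unfolding S_def using sum0 by simp
  have cS: "c i \<le> S" for i unfolding S_def using le_cd[of i] a d[of i] T1 by linarith
  have dS: "d i \<le> S" for i unfolding S_def using le_cd[of i] a c[of i] T1 by linarith
  have qa: "qfun m \<epsilon> a \<le> qfun m \<epsilon> S" by (rule qfun_mono[OF a aS \<epsilon>])
  have qc: "qfun m \<epsilon> (c i) \<le> qfun m \<epsilon> S" for i by (rule qfun_mono[OF c cS \<epsilon>])
  have qd: "qfun m \<epsilon> (d i) \<le> qfun m \<epsilon> S" for i by (rule qfun_mono[OF d dS \<epsilon>])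
  have a0: "a \<ge> 0" using a T1 by linarith
  have c0: "c i \<ge> 0" for i using c[of i] T1 by linarith
  have d0: "d i \<ge> 0" for i using d[of i] T1 by linarith
  have "Dfun m \<epsilon> a + (\<Sum>i\<in>UNIV. Dfun m \<epsilon> (c i) + Dfun m \<epsilon> (d i))
      = a * qfun m \<epsilon> a + (\<Sum>i\<in>UNIV. c i * qfun m \<epsilon> (c i) + d i * qfun m \<epsilon> (d i))"
    by (simp add: Dfun_qfun)
  also have "\<dots> \<le> a * qfun m \<epsilon> S + (\<Sum>i\<in>UNIV. c i * qfun m \<epsilon> S + d i * qfun m \<epsilon> S)"
    using qa qc qd a0 c0 d0 by (intro add_mono mult_left_mono sum_mono) auto
  also have "\<dots> = S * qfun m \<epsilon> S" unfolding S_def by (simp add: algebra_simps sum.distrib sum_distrib_right)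
  also have "\<dots> = Dfun m \<epsilon> S" by (simp add: Dfun_qfun)
  finally show ?thesis unfolding S_def .
qed

definition Wc :: "(real \<Rightarrow> real) \<Rightarrow> real^'n::finite \<Rightarrow> real^'n \<Rightarrow> real \<Rightarrow> real" where
  "Wc G x0 x t = G t + (\<Sum>i\<in>UNIV. G (1 - (x$i - x0$i)) + G (1 + (x$i - x0$i)))"
definition DWc :: "(real \<Rightarrow> real) \<Rightarrow> real^'n::finite \<Rightarrow> 'n \<Rightarrow> real^'n \<Rightarrow> real \<Rightarrow> real" where
  "DWc G1 x0 i x t = - G1 (1 - (x$i - x0$i)) + G1 (1 + (x$i - x0$i))"
definition D2Wc :: "(real \<Rightarrow> real) \<Rightarrow> real^'n::finite \<Rightarrow> 'n \<Rightarrow> 'n \<Rightarrow> real^'n \<Rightarrow> real \<Rightarrow> real" where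
  "D2Wc G2 x0 i j x t = (if i = j then G2 (1 - (x$i - x0$i)) + G2 (1 + (x$i - x0$i)) else 0)"

lemma axis_comp: "(x + h *\<^sub>R axis i (1::real))$k = x$k + h * (if k = i then 1 else 0)"
  by (simp add: axis_def)

lemma deriv_pair:
  assumes dF: "\<forall>s>0. (F has_real_derivative F' s) (at s)"
    and s1: "1 - (y - y0) > 0" and s2: "1 + (y - y0) > 0"
  shows "((\<lambda>h. F (1 - (y + h * c - y0)) + F (1 + (y + h * c - y0))) has_real_derivative
           c * (- F' (1 - (y - y0)) + F' (1 + (y - y0)))) (at 0)"
proof -
  have i1: "((\<lambda>h. 1 - (y + h * c - y0)) has_real_derivative -c) (at 0)"
    by (auto intro!: derivative_eq_intros)
  have i2: "((\<lambda>h. 1 + (y + h * c - y0)) has_real_derivative c) (at 0)"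
    by (auto intro!: derivative_eq_intros)
  have a: "((\<lambda>h. F (1 - (y + h * c - y0))) has_real_derivative F' (1 - (y - y0)) * -c) (at 0)"
    using DERIV_chain2[OF _ i1, of F] dF s1 by simp
  have b: "((\<lambda>h. F (1 + (y + h * c - y0))) has_real_derivative F' (1 + (y - y0)) * c) (at 0)"
    using DERIV_chain2[OF _ i2, of F] dF s2 by simp
  show ?thesis using DERIV_add[OF a b] by (simp add: algebra_simps)
qed

lemma deriv_pair2:
  assumes dF: "\<forall>s>0. (F has_real_derivative F' s) (at s)"
    and s1: "1 - (y - y0) > 0" and s2: "1 + (y - y0) > 0"
  shows "((\<lambda>h. - F (1 - (y + h * c - y0)) + F (1 + (y + h * c - y0))) has_real_derivative
           c * (F' (1 - (y - y0)) + F' (1 + (y - y0)))) (at 0)"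
proof -
  have i1: "((\<lambda>h. 1 - (y + h * c - y0)) has_real_derivative -c) (at 0)"
    by (auto intro!: derivative_eq_intros)
  have i2: "((\<lambda>h. 1 + (y + h * c - y0)) has_real_derivative c) (at 0)"
    by (auto intro!: derivative_eq_intros)
  have a: "((\<lambda>h. F (1 - (y + h * c - y0))) has_real_derivative F' (1 - (y - y0)) * -c) (at 0)"
    using DERIV_chain2[OF _ i1, of F] dF s1 by simp
  have b: "((\<lambda>h. F (1 + (y + h * c - y0))) has_real_derivative F' (1 + (y - y0)) * c) (at 0)"
    using DERIV_chain2[OF _ i2, of F] dF s2 by simp
  show ?thesis using DERIV_add[OF DERIV_minus[OF a] b] by (simp add: algebra_simps)
qed

lemma sum_delta_c: "(\<Sum>k\<in>(UNIV::'n::finite set). (if k = i then 1 else 0) * (F k :: real)) = F i"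
proof -
  have "(\<Sum>k\<in>(UNIV::'n set). (if k = i then 1 else 0) * F k) = (\<Sum>k\<in>UNIV. if k = i then F k else 0)"
    by (rule sum.cong) auto
  then show ?thesis by simp
qed

lemma Qbounds:
  assumes "\<bar>x$i - x0$i\<bar> < (1::real)"
  shows "1 - (x$i - x0$i) > 0" "1 + (x$i - x0$i) > 0" "1 - (x$i - x0$i) \<le> 2" "1 + (x$i - x0$i) \<le> 2"
  using assms by auto

lemma Wc_props:
  fixes G G1 G2 :: "real \<Rightarrow> real" and x0 :: "real^'n::finite"
  assumes dG: "\<forall>s>0. (G has_real_derivative G1 s) (at s) \<and> (G1 has_real_derivative G2 s) (at s) \<and> isCont G2 s"
    and Qdef: "Q = {x. \<forall>i. \<bar>x$i - x0$i\<bar> < 1}"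
  shows "continuous_on (Q \<times> {0<..}) (\<lambda>(x,t). Wc G x0 x t)"
    and "\<forall>x\<in>Q. \<forall>t>0. ((\<lambda>s. Wc G x0 x s) has_real_derivative G1 t) (at t)"
    and "\<forall>x\<in>Q. \<forall>t>0. \<forall>i. ((\<lambda>h. Wc G x0 (x + h *\<^sub>R axis i 1) t) has_real_derivative DWc G1 x0 i x t) (at 0)"
    and "\<forall>x\<in>Q. \<forall>t>0. \<forall>i j. ((\<lambda>h. DWc G1 x0 j (x + h *\<^sub>R axis i 1) t) has_real_derivative D2Wc G2 x0 i j x t) (at 0)"
    and "\<forall>t>0. \<forall>i. continuous_on Q (\<lambda>x. DWc G1 x0 i x t)"
    and "\<forall>t>0. \<forall>i j. continuous_on Q (\<lambda>x. D2Wc G2 x0 i j x t)"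
proof -
  have dG0: "\<forall>s>0. (G has_real_derivative G1 s) (at s)" using dG by blast
  have dG1: "\<forall>s>0. (G1 has_real_derivative G2 s) (at s)" using dG by blast
  have cG: "continuous_on {0<..} G"
    by (rule continuous_at_imp_continuous_on) (use dG DERIV_isCont in auto)
  have cG1: "continuous_on {0<..} G1"
    by (rule continuous_at_imp_continuous_on) (use dG DERIV_isCont in auto)
  have cG2: "continuous_on {0<..} G2"
    by (rule continuous_at_imp_continuous_on) (use dG in auto)
  have Qb: "\<bar>x$i - x0$i\<bar> < 1" if "x \<in> Q" for x i using that Qdef by blast
  have Qp: "1 - (x$i - x0$i) > 0" "1 + (x$i - x0$i) > 0" if "x \<in> Q" for x i
    using Qbounds[OF Qb[OF that]] by auto
  have compo: "continuous_on S (\<lambda>p. H (1 - ((fst p)$i - x0$i)))" "continuous_on S (\<lambda>p. H (1 + ((fst p)$i - x0$i)))"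
    if "continuous_on {0<..} H" "\<forall>p\<in>S. \<bar>(fst p)$i - x0$i\<bar> < 1" for H S i
  proof -
    show "continuous_on S (\<lambda>p. H (1 - ((fst p)$i - x0$i)))"
      by (rule continuous_on_compose2[OF that(1)]) (use that(2) in \<open>auto intro!: continuous_intros\<close>)
    show "continuous_on S (\<lambda>p. H (1 + ((fst p)$i - x0$i)))"
      by (rule continuous_on_compose2[OF that(1)]) (use that(2) in \<open>auto intro!: continuous_intros\<close>)
  qed
  show "continuous_on (Q \<times> {0<..}) (\<lambda>(x,t). Wc G x0 x t)"
  proof -
    have "continuous_on (Q \<times> {0<..}) (\<lambda>p. G (snd p) + (\<Sum>i\<in>UNIV. G (1 - ((fst p)$i - x0$i)) + G (1 + ((fst p)$i - x0$i))))"
    proof (intro continuous_on_add continuous_on_sum)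
      show "continuous_on (Q \<times> {0<..}) (\<lambda>p. G (snd p))"
        by (rule continuous_on_compose2[OF cG]) (auto intro!: continuous_intros)
      fix i
      show "continuous_on (Q \<times> {0<..}) (\<lambda>p. G (1 - ((fst p)$i - x0$i)))"
        by (rule compo(1)[OF cG]) (use Qb in auto)
      show "continuous_on (Q \<times> {0<..}) (\<lambda>p. G (1 + ((fst p)$i - x0$i)))"
        by (rule compo(2)[OF cG]) (use Qb in auto)
    qed
    then show ?thesis unfolding Wc_def by (simp add: case_prod_beta)
  qed
  show "\<forall>x\<in>Q. \<forall>t>0. ((\<lambda>s. Wc G x0 x s) has_real_derivative G1 t) (at t)"
    unfolding Wc_def using dG0 by (auto intro!: derivative_eq_intros)
  show "\<forall>x\<in>Q. \<forall>t>0. \<forall>i. ((\<lambda>h. Wc G x0 (x + h *\<^sub>R axis i 1) t) has_real_derivative DWc G1 x0 i x t) (at 0)"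
  proof (intro ballI allI impI)
    fix x t i assume x: "x \<in> Q" and t: "(t::real) > 0"
    have "((\<lambda>h. G t + (\<Sum>k\<in>UNIV. G (1 - (x$k + h * (if k = i then 1 else 0) - x0$k)) + G (1 + (x$k + h * (if k = i then 1 else 0) - x0$k))))
        has_real_derivative 0 + (\<Sum>k\<in>UNIV. (if k = i then 1 else 0) * (- G1 (1 - (x$k - x0$k)) + G1 (1 + (x$k - x0$k))))) (at 0)"
      by (intro DERIV_add DERIV_const DERIV_sum deriv_pair[OF dG0]) (use Qbounds[OF Qb[OF x]] in auto)
    then show "((\<lambda>h. Wc G x0 (x + h *\<^sub>R axis i 1) t) has_real_derivative DWc G1 x0 i x t) (at 0)"
      unfolding Wc_def DWc_def axis_comp sum_delta_c by simp
  qed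
  show "\<forall>x\<in>Q. \<forall>t>0. \<forall>i j. ((\<lambda>h. DWc G1 x0 j (x + h *\<^sub>R axis i 1) t) has_real_derivative D2Wc G2 x0 i j x t) (at 0)"
  proof (intro ballI allI impI)
    fix x t i j assume x: "x \<in> Q" and t: "(t::real) > 0"
    have "((\<lambda>h. - G1 (1 - (x$j + h * (if j = i then 1 else 0) - x0$j)) + G1 (1 + (x$j + h * (if j = i then 1 else 0) - x0$j)))
        has_real_derivative (if j = i then 1 else 0) * (G2 (1 - (x$j - x0$j)) + G2 (1 + (x$j - x0$j)))) (at 0)"
      by (rule deriv_pair2[OF dG1]) (use Qbounds[OF Qb[OF x]] in auto)
    then show "((\<lambda>h. DWc G1 x0 j (x + h *\<^sub>R axis i 1) t) has_real_derivative D2Wc G2 x0 i j x t) (at 0)"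
      unfolding DWc_def D2Wc_def axis_comp by (cases "i = j") auto
  qed
  have compx: "continuous_on Q (\<lambda>x. H (1 - (x$i - x0$i)))" "continuous_on Q (\<lambda>x. H (1 + (x$i - x0$i)))"
    if "continuous_on {0<..} H" for H i
  proof -
    show "continuous_on Q (\<lambda>x. H (1 - (x$i - x0$i)))"
      by (rule continuous_on_compose2[OF that]) (use Qp in \<open>auto intro!: continuous_intros\<close>)
    show "continuous_on Q (\<lambda>x. H (1 + (x$i - x0$i)))"
      by (rule continuous_on_compose2[OF that]) (use Qp in \<open>auto intro!: continuous_intros\<close>)
  qed
  show "\<forall>t>0. \<forall>i. continuous_on Q (\<lambda>x. DWc G1 x0 i x t)"
    unfolding DWc_def using compx[OF cG1] by (auto intro!: continuous_on_add continuous_on_minus continuous_on_diff)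
  show "\<forall>t>0. \<forall>i j. continuous_on Q (\<lambda>x. D2Wc G2 x0 i j x t)"
  proof (intro allI impI)
    fix t :: real and i j :: 'n
    show "continuous_on Q (\<lambda>x. D2Wc G2 x0 i j x t)"
    proof (cases "i = j")
      case True
      then show ?thesis unfolding D2Wc_def using compx[OF cG2] by (auto intro!: continuous_on_add)
    next
      case False
      then show ?thesis unfolding D2Wc_def by simp
    qed
  qed
qed

lemma abs_bound_mult: "\<bar>p\<bar> \<le> A \<Longrightarrow> p * X \<le> A * \<bar>X::real\<bar>"
proof -
  assume "\<bar>p\<bar> \<le> A"
  then have "\<bar>p\<bar> * \<bar>X\<bar> \<le> A * \<bar>X\<bar>" by (intro mult_right_mono) auto
  moreover have "p * X \<le> \<bar>p\<bar> * \<bar>X\<bar>" by (metis abs_ge_self abs_mult)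
  ultimately show ?thesis by linarith
qed

lemma Dfun_nonneg: "x \<ge> E (m+1) 1 \<Longrightarrow> Dfun m \<epsilon> x > 0"
proof -
  assume x: "x \<ge> E (m+1) 1"
  then have "x > 0" using E1_ge1[of "m+1"] by linarith
  then show ?thesis using qfun_pos[OF x] by (simp add: Dfun_qfun)
qed

lemma sum_if_diag: "(\<Sum>j\<in>(UNIV::'n::finite set). a j * (if i = j then c else 0)) = a i * (c::real)"
proof -
  have "(\<Sum>j\<in>(UNIV::'n set). a j * (if i = j then c else 0)) = (\<Sum>j\<in>UNIV. if j = i then a j * c else 0)"
    by (rule sum.cong) auto
  then show ?thesis by simp
qed

lemma Wc_super:
  fixes a :: "'n::finite \<Rightarrow> 'n \<Rightarrow> real^'n \<Rightarrow> real" and b :: "'n \<Rightarrow> real^'n \<Rightarrow> real"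
    and f :: "real^'n \<Rightarrow> real \<Rightarrow> real" and G G1 G2 :: "real \<Rightarrow> real" and x0 :: "real^'n"
  assumes \<epsilon>: "\<epsilon> > 0" and A: "A \<ge> 0"
    and Qdef: "Q = {x. \<forall>i. \<bar>x$i - x0$i\<bar> < 1}"
    and ab: "\<forall>x\<in>Q. (\<forall>i j. \<bar>a i j x\<bar> \<le> A) \<and> (\<forall>i. \<bar>b i x\<bar> \<le> A)"
    and fF: "\<forall>x\<in>Q. \<forall>u\<ge>U0. f x u \<le> - Dfun m \<epsilon> u"
    and Gge: "\<forall>s>0. G s \<ge> U0 \<and> G s \<ge> E (m+1) 1"
    and small: "\<forall>s. 0 < s \<and> s \<le> 2 \<longrightarrow> \<bar>G1 s\<bar> + \<bar>G2 s\<bar> \<le> Dfun m \<epsilon> (G s) / (4 * (A + 1))"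
    and G1b: "\<forall>s>0. \<bar>G1 s\<bar> \<le> Dfun m \<epsilon> (G s) / (4 * (A + 1))"
  shows "\<forall>x\<in>Q. \<forall>t>0. (\<Sum>i\<in>UNIV. \<Sum>j\<in>UNIV. a i j x * D2Wc G2 x0 i j x t)
           + (\<Sum>i\<in>UNIV. b i x * DWc G1 x0 i x t) + f x (Wc G x0 x t) < G1 t"
proof (intro ballI allI impI)
  fix x t assume x: "x \<in> Q" and t: "(t::real) > 0"
  define K where "K = 4 * (A + 1)"
  have K: "K > 0" unfolding K_def using A by simp
  have AK: "A / K \<le> 1 / 4" unfolding K_def using A by (simp add: field_simps)
  define s1 where "s1 i = 1 - (x$i - x0$i)" for i
  define s2 where "s2 i = 1 + (x$i - x0$i)" for i
  have s: "0 < s1 i" "s1 i \<le> 2" "0 < s2 i" "s2 i \<le> 2" for i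
    unfolding s1_def s2_def using Qbounds[of x i x0] x Qdef by auto
  define Dt where "Dt = Dfun m \<epsilon> (G t)"
  define Dk where "Dk i = Dfun m \<epsilon> (G (s1 i))" for i
  define Dl where "Dl i = Dfun m \<epsilon> (G (s2 i))" for i
  have Dtpos: "Dt > 0" unfolding Dt_def using Dfun_nonneg Gge t by blast
  have Dk0: "Dk i \<ge> 0" for i unfolding Dk_def using Dfun_nonneg Gge s(1)[of i] by (meson less_imp_le)
  have Dl0: "Dl i \<ge> 0" for i unfolding Dl_def using Dfun_nonneg Gge s(3)[of i] by (meson less_imp_le)
  have per: "a i i x * (G2 (s1 i) + G2 (s2 i)) + b i x * (- G1 (s1 i) + G1 (s2 i)) \<le> (Dk i + Dl i) / 4" for i
  proof -
    have aa: "\<bar>a i i x\<bar> \<le> A" and bb: "\<bar>b i x\<bar> \<le> A" using ab x by auto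
    have "a i i x * (G2 (s1 i) + G2 (s2 i)) + b i x * (- G1 (s1 i) + G1 (s2 i))
        \<le> A * \<bar>G2 (s1 i) + G2 (s2 i)\<bar> + A * \<bar>- G1 (s1 i) + G1 (s2 i)\<bar>"
      using abs_bound_mult[OF aa] abs_bound_mult[OF bb] by (intro add_mono) auto
    also have "\<dots> \<le> A * ((\<bar>G1 (s1 i)\<bar> + \<bar>G2 (s1 i)\<bar>) + (\<bar>G1 (s2 i)\<bar> + \<bar>G2 (s2 i)\<bar>))"
    proof -
      have "\<bar>G2 (s1 i) + G2 (s2 i)\<bar> + \<bar>- G1 (s1 i) + G1 (s2 i)\<bar>
          \<le> (\<bar>G1 (s1 i)\<bar> + \<bar>G2 (s1 i)\<bar>) + (\<bar>G1 (s2 i)\<bar> + \<bar>G2 (s2 i)\<bar>)" by linarith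
      then show ?thesis using A by (metis distrib_left mult_left_mono)
    qed
    also have "\<dots> \<le> A * (Dk i / K + Dl i / K)"
      using small s[of i] A unfolding Dk_def Dl_def K_def by (intro mult_left_mono add_mono) auto
    also have "\<dots> = (A / K) * (Dk i + Dl i)" by (simp add: add_divide_distrib algebra_simps)
    also have "\<dots> \<le> (1/4) * (Dk i + Dl i)" using AK Dk0 Dl0 by (intro mult_right_mono) auto
    finally show ?thesis by simp
  qed
  have T: "(\<Sum>i\<in>UNIV. \<Sum>j\<in>UNIV. a i j x * D2Wc G2 x0 i j x t) + (\<Sum>i\<in>UNIV. b i x * DWc G1 x0 i x t)
      = (\<Sum>i\<in>UNIV. a i i x * (G2 (s1 i) + G2 (s2 i)) + b i x * (- G1 (s1 i) + G1 (s2 i)))"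
    unfolding D2Wc_def DWc_def s1_def s2_def sum_if_diag by (simp add: sum.distrib)
  also have "\<dots> \<le> (\<Sum>i\<in>UNIV. (Dk i + Dl i) / 4)" by (rule sum_mono) (rule per)
  finally have T1: "(\<Sum>i\<in>UNIV. \<Sum>j\<in>UNIV. a i j x * D2Wc G2 x0 i j x t) + (\<Sum>i\<in>UNIV. b i x * DWc G1 x0 i x t)
      \<le> (\<Sum>i\<in>UNIV. Dk i + Dl i) / 4" by (simp add: sum_divide_distrib)
  have Wdef: "Wc G x0 x t = G t + (\<Sum>i\<in>UNIV. G (s1 i) + G (s2 i))" unfolding Wc_def s1_def s2_def by simp
  have Gs: "G (s1 i) \<ge> E (m+1) 1" "G (s2 i) \<ge> E (m+1) 1" for i using Gge s by auto
  have sup: "Dt + (\<Sum>i\<in>UNIV. Dk i + Dl i) \<le> Dfun m \<epsilon> (Wc G x0 x t)"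
    unfolding Wdef Dt_def Dk_def Dl_def by (rule D_super[OF \<epsilon>]) (use Gge t Gs in auto)
  have "(\<Sum>i\<in>UNIV. G (s1 i) + G (s2 i)) \<ge> 0"
    using Gs E1_ge1[of "m+1"] by (intro sum_nonneg) (smt (verit))
  then have WU: "Wc G x0 x t \<ge> U0" unfolding Wdef using Gge t by force
  have fW: "f x (Wc G x0 x t) \<le> - Dfun m \<epsilon> (Wc G x0 x t)" using fF x WU by blast
  have G1t: "G1 t \<ge> - Dt / 4"
  proof -
    have "\<bar>G1 t\<bar> \<le> Dt / K" using G1b t unfolding Dt_def K_def by blast
    also have "\<dots> \<le> Dt / 4" using Dtpos K unfolding K_def using A by (intro divide_left_mono) auto
    finally show ?thesis by linarith
  qed
  have S0: "(\<Sum>i\<in>UNIV. Dk i + Dl i) \<ge> 0" using Dk0 Dl0 by (intro sum_nonneg) (simp add: add_nonneg_nonneg)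
  show "(\<Sum>i\<in>UNIV. \<Sum>j\<in>UNIV. a i j x * D2Wc G2 x0 i j x t)
           + (\<Sum>i\<in>UNIV. b i x * DWc G1 x0 i x t) + f x (Wc G x0 x t) < G1 t"
    using T1 fW sup G1t Dtpos S0 by linarith
qed



lemma F_from_F2:
  assumes "cond_F2 f" "R > 0"
  shows "\<exists>m \<epsilon> U0. \<epsilon> > 0 \<and> U0 \<ge> E (m+1) 1 \<and> (\<forall>u\<ge>U0. F_sup f R u \<le> - Dfun m \<epsilon> u)"
proof -
  obtain m \<epsilon> where e: "\<epsilon> > 0" and lim: "filterlim (\<lambda>u. F_sup f R u / Dfun m \<epsilon> u) at_bot at_top"
    using assms unfolding cond_F2_def Dfun_def by blast
  have "eventually (\<lambda>u. F_sup f R u / Dfun m \<epsilon> u \<le> -1) at_top"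
    using lim unfolding filterlim_at_bot by blast
  then obtain N where N: "\<And>u. u \<ge> N \<Longrightarrow> F_sup f R u / Dfun m \<epsilon> u \<le> -1"
    unfolding eventually_at_top_linorder by blast
  define U0 where "U0 = max N (E (m+1) 1)"
  have "F_sup f R u \<le> - Dfun m \<epsilon> u" if "u \<ge> U0" for u
  proof -
    have D: "Dfun m \<epsilon> u > 0" by (rule Dfun_nonneg) (use that in \<open>simp add: U0_def\<close>)
    have "F_sup f R u / Dfun m \<epsilon> u \<le> -1" using N that by (simp add: U0_def)
    then show ?thesis using D by (simp add: divide_le_eq)
  qed
  then show ?thesis using e by (intro exI[of _ m] exI[of _ \<epsilon>] exI[of _ U0]) (auto simp: U0_def)
qed

lemma f_le_F:
  assumes lip: "loc_lipschitz_xu f" and x: "x \<in> cball 0 R" and u: "u \<ge> 0" and R: "R > 0"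
  shows "f x u \<le> F_sup f R u"
proof -
  define R' where "R' = max R u + 1"
  have R': "R' > 0" unfolding R'_def using R by simp
  obtain C where C: "\<forall>x\<in>cball 0 R'. \<forall>y\<in>cball 0 R'. \<forall>u\<in>{0..R'}. \<forall>v\<in>{0..R'}.
        \<bar>f x u - f y v\<bar> \<le> C * (dist x y + \<bar>u - v\<bar>)"
    using lip R' unfolding loc_lipschitz_xu_def by blast
  have bd: "f y u \<le> f 0 u + \<bar>C\<bar> * R'" if "y \<in> cball 0 R" for y
  proof -
    have y': "y \<in> cball 0 R'" using that unfolding R'_def by auto
    have z: "0 \<in> cball 0 R'" using R' by simp
    have uR: "u \<in> {0..R'}" using u by (simp add: R'_def)
    have "\<bar>f y u - f 0 u\<bar> \<le> C * (dist y 0 + \<bar>u - u\<bar>)"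
      using C y' z uR by blast
    also have "\<dots> \<le> \<bar>C\<bar> * dist y 0" by (simp add: abs_ge_self mult_right_mono)
    also have "\<dots> \<le> \<bar>C\<bar> * R'" using that unfolding R'_def
      by (intro mult_left_mono) (auto simp: dist_commute)
    finally show ?thesis by linarith
  qed
  have "bdd_above ((\<lambda>y. f y u) ` cball 0 R)"
    by (rule bdd_aboveI2[of _ _ "f 0 u + \<bar>C\<bar> * R'"]) (use bd in blast)
  then show ?thesis unfolding F_sup_def by (rule cSUP_upper[OF x])
qed

lemma hoelder_bound:
  assumes "loc_hoelder \<alpha> h" "\<alpha> > 0" "R > 0"
  shows "\<exists>c\<ge>0. \<forall>x\<in>cball 0 R. \<bar>h x\<bar> \<le> c"
proof -
  obtain C where C: "\<forall>x\<in>cball 0 R. \<forall>y\<in>cball 0 R. \<bar>h x - h y\<bar> \<le> C * dist x y powr \<alpha>"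
    using assms unfolding loc_hoelder_def by blast
  have "\<bar>h x\<bar> \<le> \<bar>h 0\<bar> + \<bar>C\<bar> * R powr \<alpha>" if "x \<in> cball 0 R" for x
  proof -
    have z: "0 \<in> cball 0 R" using assms(3) by simp
    have "\<bar>h x - h 0\<bar> \<le> C * dist x 0 powr \<alpha>" using C that z by blast
    also have "\<dots> \<le> \<bar>C\<bar> * dist x 0 powr \<alpha>" by (simp add: abs_ge_self mult_right_mono)
    also have "\<dots> \<le> \<bar>C\<bar> * R powr \<alpha>"
      using that assms by (intro mult_left_mono powr_mono2) (auto simp: dist_commute)
    finally show ?thesis by linarith
  qed
  then show ?thesis by (intro exI[of _ "\<bar>h 0\<bar> + \<bar>C\<bar> * R powr \<alpha>"]) auto
qed

lemma Wc_ge: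
  fixes x x0 :: "real^'n::finite"
  assumes G0: "\<forall>s>0. G s \<ge> 0" and x: "\<forall>i. \<bar>x$i - x0$i\<bar> < 1" and t: "t > 0"
  shows "G t \<le> Wc G x0 x t" "G (1 - (x$i - x0$i)) \<le> Wc G x0 x t" "G (1 + (x$i - x0$i)) \<le> Wc G x0 x t"
proof -
  have p: "G (1 - (x$k - x0$k)) \<ge> 0" "G (1 + (x$k - x0$k)) \<ge> 0" for k
    using G0 Qbounds[of x k x0] x by auto
  have S0: "(\<Sum>k\<in>UNIV. G (1 - (x$k - x0$k)) + G (1 + (x$k - x0$k))) \<ge> 0"
    using p by (intro sum_nonneg) (simp add: add_nonneg_nonneg)
  have Si: "G (1 - (x$i - x0$i)) + G (1 + (x$i - x0$i)) \<le> (\<Sum>k\<in>UNIV. G (1 - (x$k - x0$k)) + G (1 + (x$k - x0$k)))"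
    by (rule member_le_sum[of i UNIV "\<lambda>k. G (1 - (x$k - x0$k)) + G (1 + (x$k - x0$k))"])
       (use p in \<open>auto simp: add_nonneg_nonneg\<close>)
  have Gt: "G t \<ge> 0" using G0 t by blast
  show "G t \<le> Wc G x0 x t" unfolding Wc_def using S0 by simp
  show "G (1 - (x$i - x0$i)) \<le> Wc G x0 x t" unfolding Wc_def using Si Gt p[of i] by linarith
  show "G (1 + (x$i - x0$i)) \<le> Wc G x0 x t" unfolding Wc_def using Si Gt p[of i] by linarith
qed

lemma local_bound:
  fixes a :: "'n::finite \<Rightarrow> 'n \<Rightarrow> real^'n \<Rightarrow> real" and b :: "'n \<Rightarrow> real^'n \<Rightarrow> real"
    and f :: "real^'n \<Rightarrow> real \<Rightarrow> real" and \<alpha> R :: real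
  assumes h\<alpha>: "0 < \<alpha>" and ha: "\<forall>i j. loc_hoelder \<alpha> (a i j)" and hb: "\<forall>i. loc_hoelder \<alpha> (b i)"
    and ell: "elliptic_pointwise a" and lip: "loc_lipschitz_xu f" and F2: "cond_F2 f" and R: "R > 0"
  shows "\<exists>B :: real \<Rightarrow> real. continuous_on {0<..} B \<and>
     (\<forall>g u x0 t. classical_solution a b f g u \<longrightarrow> norm x0 + real CARD('n) \<le> R \<longrightarrow> t > 0 \<longrightarrow> u x0 t \<le> B t)"
proof -
  obtain m \<epsilon> U0 where e: "\<epsilon> > 0" and U0ge: "U0 \<ge> E (m+1) 1" and FU: "\<forall>u\<ge>U0. F_sup f R u \<le> - Dfun m \<epsilon> u"
    using F_from_F2[OF F2 R] by blast
  have "\<forall>i j. \<exists>c\<ge>0. \<forall>x\<in>cball 0 R. \<bar>a i j x\<bar> \<le> c" using hoelder_bound ha h\<alpha> R by blast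
  then obtain ca where ca: "\<And>i j. ca i j \<ge> 0" "\<And>i j x. x \<in> cball 0 R \<Longrightarrow> \<bar>a i j x\<bar> \<le> ca i j"
    by metis
  have "\<forall>i. \<exists>c\<ge>0. \<forall>x\<in>cball 0 R. \<bar>b i x\<bar> \<le> c" using hoelder_bound hb h\<alpha> R by blast
  then obtain cb where cb: "\<And>i. cb i \<ge> 0" "\<And>i x. x \<in> cball 0 R \<Longrightarrow> \<bar>b i x\<bar> \<le> cb i"
    by metis
  define A where "A = (\<Sum>i\<in>UNIV. \<Sum>j\<in>UNIV. ca i j) + (\<Sum>i\<in>UNIV. cb i)"
  have sa0: "(\<Sum>i\<in>UNIV. \<Sum>j\<in>UNIV. ca i j) \<ge> 0" using ca(1) by (simp add: sum_nonneg)
  have sb0: "(\<Sum>i\<in>UNIV. cb i) \<ge> 0" using cb(1) by (simp add: sum_nonneg)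
  have A0: "A \<ge> 0" unfolding A_def using sa0 sb0 by simp
  have caA: "ca i j \<le> A" for i j
  proof -
    have "ca i j \<le> (\<Sum>j\<in>UNIV. ca i j)" by (rule member_le_sum) (use ca(1) in auto)
    also have "\<dots> \<le> (\<Sum>i\<in>UNIV. \<Sum>j\<in>UNIV. ca i j)"
      by (rule member_le_sum[of i UNIV "\<lambda>i. \<Sum>j\<in>UNIV. ca i j"]) (use ca(1) in \<open>auto intro: sum_nonneg\<close>)
    finally show ?thesis unfolding A_def using sb0 by linarith
  qed
  have cbA: "cb i \<le> A" for i
  proof -
    have "cb i \<le> (\<Sum>i\<in>UNIV. cb i)" by (rule member_le_sum) (use cb(1) in auto)
    then show ?thesis unfolding A_def using sa0 by linarith
  qed
  have K: "4 * (A + 1) > 0" using A0 by simp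
  obtain G G1 G2 where dG: "\<forall>s>0. (G has_real_derivative G1 s) (at s) \<and> (G1 has_real_derivative G2 s) (at s) \<and> isCont G2 s"
    and Gge: "\<forall>s>0. G s \<ge> U0 \<and> G s \<ge> E (m+1) 1"
    and small: "\<forall>s. 0 < s \<and> s \<le> 2 \<longrightarrow> \<bar>G1 s\<bar> + \<bar>G2 s\<bar> \<le> Dfun m \<epsilon> (G s) / (4 * (A + 1))"
    and G1b: "\<forall>s>0. \<bar>G1 s\<bar> \<le> Dfun m \<epsilon> (G s) / (4 * (A + 1))"
    and blowG: "\<forall>s. 0 < s \<and> s \<le> 1 \<longrightarrow> G s \<ge> 1 / s"
    using barrier[OF e K, where m=m and U=U0] by blast
  have G0: "\<forall>s>0. G s \<ge> 0" using Gge E1_ge1[of "m+1"] by force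
  have cG: "continuous_on {0<..} G"
    by (rule continuous_at_imp_continuous_on) (use dG DERIV_isCont in auto)
  define B where "B t = G t + 2 * real CARD('n) * G 1" for t
  have cB: "continuous_on {0<..} B" unfolding B_def[abs_def] by (intro continuous_on_add cG continuous_on_const)
  have main: "u x0 t \<le> B t" if sol: "classical_solution a b f g u" and nx0: "norm x0 + real CARD('n) \<le> R" and t: "t > 0"
    for g u x0 t
  proof -
    define Q where "Q = {x. \<forall>i. \<bar>x$i - x0$i\<bar> < (1::real)}"
    have QR: "x \<in> cball 0 R" if "x \<in> Q" for x
    proof -
      have "x \<in> cball x0 (real CARD('n))" by (rule Q_sub_cball) (use that in \<open>auto simp: Q_def less_imp_le\<close>)
      then have "norm (x - x0) \<le> real CARD('n)" by (simp add: dist_norm norm_minus_commute)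
      moreover have "norm x \<le> norm x0 + norm (x - x0)" by (metis add_diff_cancel_left' add_diff_eq norm_triangle_ineq)
      ultimately show ?thesis using nx0 by simp
    qed
    have ab: "\<forall>x\<in>Q. (\<forall>i j. \<bar>a i j x\<bar> \<le> A) \<and> (\<forall>i. \<bar>b i x\<bar> \<le> A)"
      using QR ca(2) cb(2) caA cbA by (meson order_trans)
    have fF: "\<forall>x\<in>Q. \<forall>u\<ge>U0. f x u \<le> - Dfun m \<epsilon> u"
    proof (intro ballI allI impI)
      fix x v assume x: "x \<in> Q" and v: "v \<ge> U0"
      have "v \<ge> 0" using v U0ge E1_ge1[of "m+1"] by linarith
      then have "f x v \<le> F_sup f R v" by (rule f_le_F[OF lip QR[OF x] _ R])
      also have "\<dots> \<le> - Dfun m \<epsilon> v" using FU v by blast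
      finally show "f x v \<le> - Dfun m \<epsilon> v" .
    qed
    have super: "\<forall>x\<in>Q. \<forall>t>0. (\<Sum>i\<in>UNIV. \<Sum>j\<in>UNIV. a i j x * D2Wc G2 x0 i j x t)
           + (\<Sum>i\<in>UNIV. b i x * DWc G1 x0 i x t) + f x (Wc G x0 x t) < G1 t"
      by (rule Wc_super[OF e A0 Q_def ab fF Gge small G1b])
    have blow: "\<forall>V. \<exists>\<delta>>0. \<forall>x\<in>Q. \<forall>t>0. (t \<le> \<delta> \<or> (\<exists>i. 1 - \<bar>x$i - x0$i\<bar> \<le> \<delta>)) \<longrightarrow> V < Wc G x0 x t"
    proof
      fix V :: real
      define \<delta> where "\<delta> = min 1 (1 / (\<bar>V\<bar> + 1))"
      have \<delta>: "\<delta> > 0" "\<delta> \<le> 1" unfolding \<delta>_def by auto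
      have key: "V < G s" if "0 < s" "s \<le> \<delta>" for s
      proof -
        have "1 / s \<le> G s" using blowG that \<delta> by auto
        moreover have "1 / \<delta> \<le> 1 / s" using that by (simp add: frac_le)
        moreover have "\<bar>V\<bar> + 1 \<le> 1 / \<delta>" unfolding \<delta>_def
          by (cases "1 \<le> 1 / (\<bar>V\<bar> + 1)") (auto simp: field_simps)
        ultimately show ?thesis by linarith
      qed
      show "\<exists>\<delta>>0. \<forall>x\<in>Q. \<forall>t>0. (t \<le> \<delta> \<or> (\<exists>i. 1 - \<bar>x$i - x0$i\<bar> \<le> \<delta>)) \<longrightarrow> V < Wc G x0 x t"
      proof (intro exI[of _ \<delta>] conjI ballI allI impI \<delta>(1))
        fix x t assume x: "x \<in> Q" and t: "(t::real) > 0" and c: "t \<le> \<delta> \<or> (\<exists>i. 1 - \<bar>x$i - x0$i\<bar> \<le> \<delta>)"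
        have xq: "\<forall>i. \<bar>x$i - x0$i\<bar> < 1" using x Q_def by blast
        show "V < Wc G x0 x t"
        proof (cases "t \<le> \<delta>")
          case True
          then show ?thesis using key[OF t] Wc_ge(1)[OF G0 xq t] by linarith
        next
          case False
          then obtain i where i: "1 - \<bar>x$i - x0$i\<bar> \<le> \<delta>" using c by blast
          have xi: "\<bar>x$i - x0$i\<bar> < 1" using xq by blast
          show ?thesis
          proof (cases "x$i - x0$i \<ge> 0")
            case True
            then have "0 < 1 - (x$i - x0$i)" "1 - (x$i - x0$i) \<le> \<delta>" using i xi by auto
            then show ?thesis using key Wc_ge(2)[OF G0 xq t, of i] by (meson less_le_trans)
          next
            case False
            then have "0 < 1 + (x$i - x0$i)" "1 + (x$i - x0$i) \<le> \<delta>" using i xi by auto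
            then show ?thesis using key Wc_ge(3)[OF G0 xq t, of i] by (meson less_le_trans)
          qed
        qed
      qed
    qed
    note WP = Wc_props[OF dG Q_def]
    have cmp: "\<forall>x\<in>Q. \<forall>t>0. u x t \<le> Wc G x0 x t"
      by (rule comparison[OF sol ell Q_def WP(1) WP(2) WP(3) WP(4) WP(5) WP(6) super blow])
    have x0Q: "x0 \<in> Q" unfolding Q_def by simp
    have "u x0 t \<le> Wc G x0 x0 t" using cmp x0Q t by blast
    also have "Wc G x0 x0 t = B t" unfolding Wc_def B_def by simp
    finally show ?thesis .
  qed
  show ?thesis using cB main by blast
qed



theorem theorem1:
  fixes a :: "'n::finite \<Rightarrow> 'n \<Rightarrow> real^'n \<Rightarrow> real"
    and b :: "'n \<Rightarrow> real^'n \<Rightarrow> real"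
    and f :: "real^'n \<Rightarrow> real \<Rightarrow> real"
    and \<alpha> :: real
  assumes "0 < \<alpha>" and "\<alpha> < 1"
    and "\<forall>i j. loc_hoelder \<alpha> (a i j)"
    and "\<forall>i. loc_hoelder \<alpha> (b i)"
    and "elliptic_pointwise a"
    and "loc_lipschitz_xu f"
    and "cond_F1 f"
    and "cond_F2 f"
  shows "\<exists>M :: real^'n \<Rightarrow> real \<Rightarrow> real.
           continuous_on (UNIV \<times> {0<..}) (\<lambda>(x,t). M x t) \<and>
           (\<forall>g u. continuous_on UNIV g \<longrightarrow> (\<forall>x. g x \<ge> 0) \<longrightarrow>
              classical_solution a b f g u \<longrightarrow>
              (\<forall>x. \<forall>t>0. u x t \<le> M x t))"
proof -
  have "\<forall>k::nat. \<exists>B :: real \<Rightarrow> real. continuous_on {0<..} B \<and>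
     (\<forall>g u x0 t. classical_solution a b f g u \<longrightarrow> norm x0 + real CARD('n) \<le> real k + 1 + real CARD('n) \<longrightarrow> t > 0 \<longrightarrow> u x0 t \<le> B t)"
  proof
    fix k :: nat
    show "\<exists>B :: real \<Rightarrow> real. continuous_on {0<..} B \<and>
     (\<forall>g u x0 t. classical_solution a b f g u \<longrightarrow> norm x0 + real CARD('n) \<le> real k + 1 + real CARD('n) \<longrightarrow> t > 0 \<longrightarrow> u x0 t \<le> B t)"
      by (rule local_bound[OF assms(1,3,4,5,6,8)]) simp
  qed
  then obtain Bf where Bfc: "\<And>k. continuous_on {0<..} (Bf k)"
    and Bfb: "\<And>k g u x0 t. classical_solution a b f g u \<Longrightarrow> norm x0 \<le> real k + 1 \<Longrightarrow> t > 0 \<Longrightarrow> u x0 t \<le> Bf k t"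
    by (metis add_le_cancel_right)
  define Bp where "Bp k t = max 0 (Bf k t)" for k t
  define \<phi> where "\<phi> k \<rho> = min 1 (max 0 (\<rho> - real k + 1))" for k :: nat and \<rho> :: real
  define M where "M x t = (\<Sum>k < nat \<lfloor>norm x\<rfloor> + 3. Bp k t * \<phi> k (norm x))" for x :: "real^'n" and t
  define F where "F L x t = (\<Sum>k < L + 3. Bp k t * \<phi> k (norm x))" for L :: nat and x :: "real^'n" and t
  have Bp0: "Bp k t \<ge> 0" for k t unfolding Bp_def by simp
  have \<phi>0: "\<phi> k \<rho> \<ge> 0" for k \<rho> unfolding \<phi>_def by simp
  have bound: "u x t \<le> M x t" if sol: "classical_solution a b f g u" and t: "t > 0" for g u x t
  proof -
    define k0 where "k0 = nat \<lfloor>norm x\<rfloor>"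
    have fl: "real k0 = of_int \<lfloor>norm x\<rfloor>" unfolding k0_def by simp
    have k0: "real k0 \<le> norm x" "norm x \<le> real k0 + 1" using fl by linarith+
    have "u x t \<le> Bf k0 t" using Bfb[OF sol k0(2) t] .
    also have "\<dots> \<le> Bp k0 t * \<phi> k0 (norm x)" using k0 unfolding Bp_def \<phi>_def by simp
    also have "\<dots> \<le> M x t" unfolding M_def k0_def[symmetric]
      by (rule member_le_sum[of k0 "{..<k0 + 3}" "\<lambda>k. Bp k t * \<phi> k (norm x)"])
         (use Bp0 \<phi>0 in auto)
    finally show ?thesis .
  qed
  have cF: "continuous_on (UNIV \<times> {0<..}) (\<lambda>(x,t). F L x t)" for L
  proof -
    have cBp: "continuous_on {0<..} (Bp k)" for k unfolding Bp_def[abs_def]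
      by (intro continuous_on_max continuous_on_const Bfc)
    have "continuous_on (UNIV \<times> {0<..}) (\<lambda>p. \<Sum>k < L + 3. Bp k (snd p) * \<phi> k (norm (fst p)))"
    proof (intro continuous_on_sum continuous_on_mult)
      fix k
      show "continuous_on (UNIV \<times> {0<..}) (\<lambda>p. Bp k (snd p))"
        by (rule continuous_on_compose2[OF cBp]) (auto intro!: continuous_intros)
      show "continuous_on (UNIV \<times> {0<..}) (\<lambda>p. \<phi> k (norm (fst p)))"
        unfolding \<phi>_def by (intro continuous_intros)
    qed
    then show ?thesis unfolding F_def by (simp add: case_prod_beta)
  qed
  have MF: "M x t = F L x t" if "norm x < real L" for x t L
  proof -
    define k0 where "k0 = nat \<lfloor>norm x\<rfloor>"
    have fl: "real k0 = of_int \<lfloor>norm x\<rfloor>" unfolding k0_def by simp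
    have k0: "real k0 \<le> norm x" "norm x < real k0 + 1" using fl by linarith+
    have kL: "k0 < L" using k0 that by linarith
    have "(\<Sum>k < k0 + 3. Bp k t * \<phi> k (norm x)) = (\<Sum>k < L + 3. Bp k t * \<phi> k (norm x))"
    proof (rule sum.mono_neutral_left)
      show "{..<k0 + 3} \<subseteq> {..<L + 3}" using kL by auto
      show "\<forall>k\<in>{..<L + 3} - {..<k0 + 3}. Bp k t * \<phi> k (norm x) = 0"
      proof
        fix k assume "k \<in> {..<L + 3} - {..<k0 + 3}"
        then have "k \<ge> k0 + 3" by auto
        then have "real k \<ge> real k0 + 3" by linarith
        then have "\<phi> k (norm x) = 0" unfolding \<phi>_def using k0 by simp
        then show "Bp k t * \<phi> k (norm x) = 0" by simp
      qed
    qed auto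
    then show ?thesis unfolding M_def F_def k0_def .
  qed
  have cM: "continuous_on (UNIV \<times> {0<..}) (\<lambda>(x,t). M x t)"
  proof -
    have U: "UNIV \<times> {0<..} = (\<Union>L. ball (0::real^'n) (real L) \<times> ({0<..}::real set))"
    proof (intro set_eqI iffI)
      fix p :: "(real^'n) \<times> real" assume "p \<in> UNIV \<times> {0<..}"
      moreover obtain L :: nat where "norm (fst p) < real L" using reals_Archimedean2 by blast
      ultimately show "p \<in> (\<Union>L. ball 0 (real L) \<times> {0<..})" by (cases p) auto
    qed auto
    have "continuous_on (\<Union>L. ball (0::real^'n) (real L) \<times> ({0<..}::real set)) (\<lambda>(x,t). M x t)"
    proof (rule continuous_on_open_Union)
      fix S assume "S \<in> range (\<lambda>L. ball (0::real^'n) (real L) \<times> ({0<..}::real set))"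
      then obtain L where S: "S = ball 0 (real L) \<times> {0<..}" by blast
      show "open S" unfolding S by (intro open_Times open_ball open_greaterThan)
      have "continuous_on S (\<lambda>(x,t). F L x t)" by (rule continuous_on_subset[OF cF]) (auto simp: S)
      moreover have "\<And>p. p \<in> S \<Longrightarrow> (\<lambda>(x,t). M x t) p = (\<lambda>(x,t). F L x t) p"
        unfolding S using MF by auto
      ultimately show "continuous_on S (\<lambda>(x,t). M x t)" using continuous_on_cong by blast
    qed
    then show ?thesis using U by simp
  qed
  show ?thesis using cM bound by blast
qed


end
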